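(* Let $k_0\ge1$, $(\pi^0,P^0)\in\Theta^{k_0}$, and for each $n$ let $\mathbf x_{n\times n}$ be the network part of a sample of size $n$ from the SBM with parameters $(\pi^0,P^0)$, this SBM having order $k_0$. Then $\hat k_{\mathrm{KT}}(\mathbf x_{n\times n})\notin(\log n,n]$ eventually almost surely as $n\to\infty$.
   Context: An adjacency matrix on $n$ nodes is a symmetric $\mathbf{x}\in\{0,1\}^{n\times n}$ with zero diagonal. For $k\ge1$ let $\Theta^k=\{(\pi,P):\pi\in(0,1]^k,\ \sum_{a=1}^k\pi_a=1,\ P\in[0,1]^{k\times k}\text{ symmetric}\}$, $[k]=\{1,\dots,k\}$. For $(\pi,P)\in\Theta^k$ the SBM is the law of $(\mathbf Z_n,\mathbf X_{n\times n})$, $\mathbf Z_n\in[k]^n$, with $\mathbb P_{\pi,P}(\mathbf z_n,\mathbf x)=\prod_{a=1}^k\pi_a^{n_a}\prod_{a,b=1}^kP_{a,b}^{O_{a,b}/2}(1-P_{a,b})^{(n_{a,b}-O_{a,b})/2}$ ($0^0=1$), $n_a=\sum_i 1\{z_i=a\}$, $n_{a,b}=n_an_b$ ($a\ne b$), $n_{a,a}=n_a(n_a-1)$, $O_{a,b}=\sum_{i,j}1\{z_i=a,z_j=b\}x_{ij}$; $\mathbb P_{\pi,P}(\mathbf x)=\sum_{\mathbf z_n\in[k]^n}\mathbb P_{\pi,P}(\mathbf z_n,\mathbf x)$. The order of an SBM is the smallest $k$ for which its law can be written in this form with parameters in $\Theta^k$. KT prior: $\nu_k(\pi,P)=\Big[\frac{\Gamma(k/2)}{\Gamma(1/2)^k}\prod_{a}\pi_a^{-1/2}\Big]\Big[\prod_{1\le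 a\le b\le k}\frac{1}{\Gamma(1/2)^2}P_{a,b}^{-1/2}(1-P_{a,b})^{-1/2}\Big]$; $\mathrm{KT}_k(\mathbf x)=\int_{\Theta^k}\mathbb P_{\pi,P}(\mathbf x)\nu_k(\pi,P)\,d\pi\,dP$. Estimator: $\hat k_{\mathrm{KT}}(\mathbf x)=\arg\max_{k\ge1}\{\log\mathrm{KT}_k(\mathbf x)-\mathrm{pen}(k,n)\}$, $\mathrm{pen}(k,n)=\sum_{i=1}^{k-1}\frac{i(i+2)+3+\epsilon}{2}\log n$ for fixed $\epsilon>0$. "Eventually almost surely" means: with probability one, for all sufficiently large $n$. *)

theory Defs
  imports "HOL-Probability.Probability"
begin

text \<open>Labels are natural numbers in the set {1..k}; nodes are 0..n-1.
  An adjacency matrix on n nodes is x :: nat => nat => bool, read on i,j < n.\<close>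

definition adj_matrix :: "nat \<Rightarrow> (nat \<Rightarrow> nat \<Rightarrow> bool) \<Rightarrow> bool" where
  "adj_matrix n x \<longleftrightarrow> (\<forall>i<n. \<forall>j<n. x i j = x j i) \<and> (\<forall>i<n. \<not> x i i)"

definition pow0 :: "real \<Rightarrow> real \<Rightarrow> real" where
  "pow0 b e = (if e = 0 then 1 else b powr e)"

definition Theta :: "nat \<Rightarrow> ((nat \<Rightarrow> real) \<times> (nat \<Rightarrow> nat \<Rightarrow> real)) set" where
  "Theta k = {(\<pi>, P). (\<forall>a\<in>{1..k}. 0 < \<pi> a \<and> \<pi> a \<le> 1) \<and> (\<Sum>a=1..k. \<pi> a) = 1 \<and>
      (\<forall>a\<in>{1..k}. \<forall>b\<in>{1..k}. 0 \<le> P a b \<and> P a b \<le> 1 \<and> P a b = P b a)}"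

definition n_cnt :: "nat \<Rightarrow> (nat \<Rightarrow> nat) \<Rightarrow> nat \<Rightarrow> nat" where
  "n_cnt n z a = card {i. i < n \<and> z i = a}"

definition n_pair :: "nat \<Rightarrow> (nat \<Rightarrow> nat) \<Rightarrow> nat \<Rightarrow> nat \<Rightarrow> nat" where
  "n_pair n z a b = (if a \<noteq> b then n_cnt n z a * n_cnt n z b
                     else n_cnt n z a * (n_cnt n z a - 1))"

definition O_cnt :: "nat \<Rightarrow> (nat \<Rightarrow> nat) \<Rightarrow> (nat \<Rightarrow> nat \<Rightarrow> bool) \<Rightarrow> nat \<Rightarrow> nat \<Rightarrow> nat" where
  "O_cnt n z x a b = card {(i, j). i < n \<and> j < n \<and> z i = a \<and> z j = b \<and> x i j}"

definition sbm_joint :: "nat \<Rightarrow> (nat \<Rightarrow> real) \<Rightarrow> (nat \<Rightarrow> nat \<Rightarrow> real) \<Rightarrow> nat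
    \<Rightarrow> (nat \<Rightarrow> nat) \<Rightarrow> (nat \<Rightarrow> nat \<Rightarrow> bool) \<Rightarrow> real" where
  "sbm_joint k \<pi> P n z x =
     (\<Prod>a\<in>{1..k}. \<pi> a ^ n_cnt n z a) *
     (\<Prod>a\<in>{1..k}. \<Prod>b\<in>{1..k}.
        pow0 (P a b) (real (O_cnt n z x a b) / 2) *
        pow0 (1 - P a b) ((real (n_pair n z a b) - real (O_cnt n z x a b)) / 2))"

definition labelings :: "nat \<Rightarrow> nat \<Rightarrow> (nat \<Rightarrow> nat) set" where
  "labelings k n = PiE {0..<n} (\<lambda>_. {1..k})"

definition sbm_marg :: "nat \<Rightarrow> (nat \<Rightarrow> real) \<Rightarrow> (nat \<Rightarrow> nat \<Rightarrow> real) \<Rightarrow> nat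
    \<Rightarrow> (nat \<Rightarrow> nat \<Rightarrow> bool) \<Rightarrow> real" where
  "sbm_marg k \<pi> P n x = (\<Sum>z\<in>labelings k n. sbm_joint k \<pi> P n z x)"

definition sbm_order :: "nat \<Rightarrow> (nat \<Rightarrow> real) \<Rightarrow> (nat \<Rightarrow> nat \<Rightarrow> real) \<Rightarrow> nat" where
  "sbm_order k \<pi> P = (LEAST k'. k' \<ge> 1 \<and> (\<exists>(\<pi>', P') \<in> Theta k'.
       \<forall>n x. adj_matrix n x \<longrightarrow> sbm_marg k' \<pi>' P' n x = sbm_marg k \<pi> P n x))"

definition kt_prior :: "nat \<Rightarrow> (nat \<Rightarrow> real) \<Rightarrow> (nat \<Rightarrow> nat \<Rightarrow> real) \<Rightarrow> real" where
  "kt_prior k \<pi> P =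
     (Gamma (real k / 2) / Gamma (1/2) ^ k * (\<Prod>a\<in>{1..k}. \<pi> a powr (-1/2))) *
     (\<Prod>(a, b)\<in>{(a, b). 1 \<le> a \<and> a \<le> b \<and> b \<le> k}.
        1 / Gamma (1/2) ^ 2 * P a b powr (-1/2) * (1 - P a b) powr (-1/2))"

text \<open>Coordinates of the integration: pi_1..pi_{k-1} free (pi_k = 1 - sum), and
  P_{a,b} for 1 <= a <= b <= k free (P symmetric).\<close>
definition pi_of :: "nat \<Rightarrow> (nat \<Rightarrow> real) \<Rightarrow> nat \<Rightarrow> real" where
  "pi_of k p a = (if a < k then p a else 1 - (\<Sum>c\<in>{1..<k}. p c))"

definition P_of :: "((nat \<times> nat) \<Rightarrow> real) \<Rightarrow> nat \<Rightarrow> nat \<Rightarrow> real" where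
  "P_of q a b = q (min a b, max a b)"

definition upper_idx :: "nat \<Rightarrow> (nat \<times> nat) set" where
  "upper_idx k = {(a, b). 1 \<le> a \<and> a \<le> b \<and> b \<le> k}"

definition KT :: "nat \<Rightarrow> nat \<Rightarrow> (nat \<Rightarrow> nat \<Rightarrow> bool) \<Rightarrow> real" where
  "KT k n x = enn2real
     (\<integral>\<^sup>+ p. \<integral>\<^sup>+ q.
        ennreal (indicator (Theta k) (pi_of k p, P_of q) *
                 sbm_marg k (pi_of k p) (P_of q) n x * kt_prior k (pi_of k p) (P_of q))
      \<partial>(PiM (upper_idx k) (\<lambda>_. lborel)) \<partial>(PiM {1..<k} (\<lambda>_. lborel)))"

definition pen :: "real \<Rightarrow> nat \<Rightarrow> nat \<Rightarrow> real" where
  "pen \<epsilon> k n = (\<Sum>i=1..<k. (real (i * (i + 2)) + 3 + \<epsilon>) / 2 * ln (real n))"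

definition kt_score :: "real \<Rightarrow> nat \<Rightarrow> (nat \<Rightarrow> nat \<Rightarrow> bool) \<Rightarrow> nat \<Rightarrow> real" where
  "kt_score \<epsilon> n x k = ln (KT k n x) - pen \<epsilon> k n"

definition k_KT :: "real \<Rightarrow> nat \<Rightarrow> (nat \<Rightarrow> nat \<Rightarrow> bool) \<Rightarrow> nat" where
  "k_KT \<epsilon> n x = (LEAST k. 1 \<le> k \<and> (\<forall>k'\<ge>1. kt_score \<epsilon> n x k' \<le> kt_score \<epsilon> n x k))"

end

theory Submission
  imports Defs
begin


lemma pow0_nonneg: "b \<ge> 0 \<Longrightarrow> pow0 b e \<ge> 0"
  by (simp add: pow0_def)

lemma pow0_add: "b \<ge> 0 \<Longrightarrow> e1 \<ge> 0 \<Longrightarrow> e2 \<ge> 0 \<Longrightarrow> pow0 b (e1 + e2) = pow0 b e1 * pow0 b e2"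
  by (auto simp: pow0_def powr_add)

lemma pow0_sum: "finite S \<Longrightarrow> b \<ge> 0 \<Longrightarrow> (\<And>s. s \<in> S \<Longrightarrow> e s \<ge> 0) \<Longrightarrow>
   (\<Prod>s\<in>S. pow0 b (e s)) = pow0 b (\<Sum>s\<in>S. e s)"
proof (induction S rule: finite_induct)
  case empty then show ?case by (simp add: pow0_def)
next
  case (insert x F)
  then show ?case by (simp add: pow0_add sum_nonneg)
qed

lemma pow0_half_sq: "b \<ge> 0 \<Longrightarrow> pow0 b (1/2) * pow0 b (1/2) = b"
  using pow0_add[of b "1/2" "1/2"] by (simp add: pow0_def)

definition Up :: "nat \<Rightarrow> (nat \<times> nat) set" where
  "Up n = {(i,j). i < j \<and> j < n}"

definition matu :: "(nat \<times> nat \<Rightarrow> bool) \<Rightarrow> nat \<Rightarrow> nat \<Rightarrow> bool" where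
  "matu u i j = (if i < j then u (i,j) else if j < i then u (j,i) else False)"

definition UU :: "nat \<Rightarrow> (nat \<times> nat \<Rightarrow> bool) set" where
  "UU n = PiE (Up n) (\<lambda>_. UNIV)"

lemma finite_Up[simp]: "finite (Up n)"
  by (rule finite_subset[of _ "{..<n} \<times> {..<n}"]) (auto simp: Up_def)

lemma finite_UU[simp]: "finite (UU n)"
  unfolding UU_def by (intro finite_PiE) auto

lemma adj_matu: "adj_matrix n (matu u)"
  by (auto simp: adj_matrix_def matu_def)

definition OP :: "nat \<Rightarrow> (nat \<times> nat) set" where
  "OP n = {(i,j). i < n \<and> j < n \<and> i \<noteq> j}"

lemma finite_OP[simp]: "finite (OP n)"
  by (rule finite_subset[of _ "{..<n} \<times> {..<n}"]) (auto simp: OP_def)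

lemma card_pairs: "card {p \<in> OP n. (z (fst p), z (snd p)) = (a, b)} = n_pair n z a b"
proof -
  define A where "A = {i. i < n \<and> z i = a}"
  define B where "B = {i. i < n \<and> z i = b}"
  have fA: "finite A" "finite B" by (auto simp: A_def B_def)
  show ?thesis
  proof (cases "a = b")
    case False
    then have "{p \<in> OP n. (z (fst p), z (snd p)) = (a, b)} = A \<times> B"
      by (auto simp: OP_def A_def B_def)
    then show ?thesis using False by (simp add: n_pair_def n_cnt_def A_def B_def card_cartesian_product)
  next
    case True
    then have e: "{p \<in> OP n. (z (fst p), z (snd p)) = (a, b)} = A \<times> A - (\<lambda>i. (i,i)) ` A"
      by (auto simp: OP_def A_def B_def)
    have "card (A \<times> A - (\<lambda>i. (i,i)) ` A) = card A * card A - card A"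
      using fA by (subst card_Diff_subset) (auto simp: card_image inj_on_def card_cartesian_product)
    then show ?thesis using True e
      by (simp add: n_pair_def n_cnt_def A_def algebra_simps diff_mult_distrib2)
  qed
qed

lemma O_cnt_matu: "O_cnt n z (matu u) a b = card {p \<in> OP n. (z (fst p), z (snd p)) = (a, b) \<and> matu u (fst p) (snd p)}"
  unfolding O_cnt_def
  by (rule arg_cong[where f=card]) (auto simp: OP_def matu_def split: if_splits)

lemma O_le_pair: "O_cnt n z (matu u) a b \<le> n_pair n z a b"
  unfolding O_cnt_matu card_pairs[symmetric]
  by (rule card_mono) auto

lemma joint_pairs:
  assumes z: "z \<in> labelings k n"
    and P: "\<forall>a\<in>{1..k}. \<forall>b\<in>{1..k}. 0 \<le> P a b \<and> P a b \<le> 1 \<and> P a b = P b a"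
  shows "(\<Prod>a\<in>{1..k}. \<Prod>b\<in>{1..k}.
        pow0 (P a b) (real (O_cnt n z (matu u) a b) / 2) *
        pow0 (1 - P a b) ((real (n_pair n z a b) - real (O_cnt n z (matu u) a b)) / 2))
     = (\<Prod>p\<in>Up n. if u p then P (z (fst p)) (z (snd p)) else 1 - P (z (fst p)) (z (snd p)))"
proof -
  define x where "x = matu u"
  define g where "g p = pow0 (P (z (fst p)) (z (snd p))) (if x (fst p) (snd p) then 1/2 else 0) *
     pow0 (1 - P (z (fst p)) (z (snd p))) (if x (fst p) (snd p) then 0 else 1/2)" for p
  have zr: "z i \<in> {1..k}" if "i < n" for i
    using z that by (auto simp: labelings_def PiE_def Pi_def)
  define S where "S a b = {p \<in> OP n. (z (fst p), z (snd p)) = (a, b)}" for a b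
  have step1: "(\<Prod>p\<in>S a b. g p) = pow0 (P a b) (real (O_cnt n z x a b) / 2) *
        pow0 (1 - P a b) ((real (n_pair n z a b) - real (O_cnt n z x a b)) / 2)"
    if ab: "a \<in> {1..k}" "b \<in> {1..k}" for a b
  proof -
    have Pab: "0 \<le> P a b" "P a b \<le> 1" using P ab by auto
    have fS: "finite (S a b)" by (simp add: S_def)
    have "(\<Prod>p\<in>S a b. g p) = (\<Prod>p\<in>S a b. pow0 (P a b) (if x (fst p) (snd p) then 1/2 else 0) *
        pow0 (1 - P a b) (if x (fst p) (snd p) then 0 else 1/2))"
      by (rule prod.cong) (auto simp: g_def S_def)
    also have "\<dots> = pow0 (P a b) (\<Sum>p\<in>S a b. if x (fst p) (snd p) then 1/2 else 0) *
        pow0 (1 - P a b) (\<Sum>p\<in>S a b. if x (fst p) (snd p) then 0 else 1/2)"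
      using Pab fS by (simp add: prod.distrib pow0_sum)
    also have "(\<Sum>p\<in>S a b. if x (fst p) (snd p) then 1/2 else 0) = real (card {p\<in>S a b. x (fst p) (snd p)}) / 2"
      using fS by (simp add: sum.If_cases Int_def conj_commute)
    also have "{p\<in>S a b. x (fst p) (snd p)} = {p \<in> OP n. (z (fst p), z (snd p)) = (a, b) \<and> matu u (fst p) (snd p)}"
      by (auto simp: S_def x_def)
    also have "(\<Sum>p\<in>S a b. if x (fst p) (snd p) then 0 else 1/2) = real (card {p\<in>S a b. \<not> x (fst p) (snd p)}) / 2"
      using fS by (simp add: sum.If_cases Int_def conj_commute)
    also have "card {p\<in>S a b. \<not> x (fst p) (snd p)} = card (S a b) - card {p\<in>S a b. x (fst p) (snd p)}"
    proof -
      have "{p\<in>S a b. \<not> x (fst p) (snd p)} = S a b - {p\<in>S a b. x (fst p) (snd p)}" by auto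
      then show ?thesis using fS by (simp add: card_Diff_subset)
    qed
    also have "{p\<in>S a b. x (fst p) (snd p)} = {p \<in> OP n. (z (fst p), z (snd p)) = (a, b) \<and> matu u (fst p) (snd p)}"
      by (auto simp: S_def x_def)
    finally show ?thesis
      using O_le_pair[of n z u a b] unfolding x_def O_cnt_matu[symmetric] card_pairs[symmetric] S_def
      by (simp add: of_nat_diff)
  qed
  have "(\<Prod>a\<in>{1..k}. \<Prod>b\<in>{1..k}.
        pow0 (P a b) (real (O_cnt n z x a b) / 2) *
        pow0 (1 - P a b) ((real (n_pair n z a b) - real (O_cnt n z x a b)) / 2))
      = (\<Prod>a\<in>{1..k}. \<Prod>b\<in>{1..k}. \<Prod>p\<in>S a b. g p)"
    by (simp add: step1)
  also have "\<dots> = (\<Prod>ab\<in>{1..k} \<times> {1..k}. \<Prod>p\<in>S (fst ab) (snd ab). g p)"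
    by (simp add: prod.cartesian_product case_prod_beta)
  also have "\<dots> = (\<Prod>ab\<in>{1..k} \<times> {1..k}. \<Prod>p\<in>{p \<in> OP n. (\<lambda>p. (z (fst p), z (snd p))) p = ab}. g p)"
    by (simp add: S_def)
  also have "\<dots> = (\<Prod>p\<in>OP n. g p)"
  proof -
    have "(\<lambda>p. (z (fst p), z (snd p))) ` OP n \<subseteq> {1..k} \<times> {1..k}"
      using zr by (auto simp: OP_def)
    then show ?thesis by (intro prod.group) auto
  qed
  also have "OP n = Up n \<union> (\<lambda>(i,j). (j,i)) ` Up n"
    by (auto simp: OP_def Up_def image_iff)
  also have "(\<Prod>p\<in>Up n \<union> (\<lambda>(i,j). (j,i)) ` Up n. g p) = (\<Prod>p\<in>Up n. g p) * (\<Prod>p\<in>(\<lambda>(i,j). (j,i)) ` Up n. g p)"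
    by (rule prod.union_disjoint) (auto simp: Up_def[symmetric], auto simp: Up_def)
  also have "(\<Prod>p\<in>(\<lambda>(i,j). (j,i)) ` Up n. g p) = (\<Prod>p\<in>Up n. g (snd p, fst p))"
    by (subst prod.reindex) (auto simp: inj_on_def case_prod_beta intro!: prod.cong)
  also have "(\<Prod>p\<in>Up n. g p) * (\<Prod>p\<in>Up n. g (snd p, fst p)) = (\<Prod>p\<in>Up n. g p * g (snd p, fst p))"
    by (simp add: prod.distrib)
  also have "\<dots> = (\<Prod>p\<in>Up n. if u p then P (z (fst p)) (z (snd p)) else 1 - P (z (fst p)) (z (snd p)))"
  proof (rule prod.cong)
    fix p assume p: "p \<in> Up n"
    obtain i j where ij: "p = (i,j)" "i < j" "j < n" using p by (auto simp: Up_def)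
    have zi: "z i \<in> {1..k}" "z j \<in> {1..k}" using zr ij by auto
    have sym: "P (z j) (z i) = P (z i) (z j)" using P zi by auto
    have r: "0 \<le> P (z i) (z j)" "P (z i) (z j) \<le> 1" using P zi by auto
    show "g p * g (snd p, fst p) = (if u p then P (z (fst p)) (z (snd p)) else 1 - P (z (fst p)) (z (snd p)))"
      using ij r pow0_half_sq[of "P (z i) (z j)"] pow0_half_sq[of "1 - P (z i) (z j)"]
      by (auto simp: g_def x_def matu_def sym pow0_def)
  qed simp
  finally show ?thesis by (simp add: x_def)
qed

lemma sum_pairs: "(\<Sum>u\<in>UU n. \<Prod>p\<in>Up n. if u p then q p else 1 - q p) = (1::real)"
proof -
  have "(\<Prod>p\<in>Up n. \<Sum>y\<in>(UNIV::bool set). if y then q p else 1 - q p) =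
        (\<Sum>u\<in>UU n. \<Prod>p\<in>Up n. if u p then q p else 1 - q p)"
    unfolding UU_def by (rule prod_sum_PiE) auto
  moreover have "(\<Prod>p\<in>Up n. \<Sum>y\<in>(UNIV::bool set). if y then q p else 1 - q p) = 1"
    by (simp add: UNIV_bool)
  ultimately show ?thesis by simp
qed

lemma labels_prod: "z \<in> labelings k n \<Longrightarrow> (\<Prod>a\<in>{1..k}. (w::nat\<Rightarrow>real) a ^ n_cnt n z a) = (\<Prod>i\<in>{0..<n}. w (z i))"
proof -
  assume z: "z \<in> labelings k n"
  have "(\<Prod>i\<in>{0..<n}. w (z i)) = (\<Prod>a\<in>{1..k}. \<Prod>i\<in>{i \<in> {0..<n}. z i = a}. w (z i))"
    using z by (intro prod.group[symmetric]) (auto simp: labelings_def PiE_def Pi_def)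
  also have "\<dots> = (\<Prod>a\<in>{1..k}. w a ^ n_cnt n z a)"
  proof (rule prod.cong)
    fix a
    have "(\<Prod>i\<in>{i \<in> {0..<n}. z i = a}. w (z i)) = (\<Prod>i\<in>{i \<in> {0..<n}. z i = a}. w a)"
      by (rule prod.cong) auto
    also have "\<dots> = w a ^ card {i \<in> {0..<n}. z i = a}" by simp
    also have "{i \<in> {0..<n}. z i = a} = {i. i < n \<and> z i = a}" by auto
    finally show "(\<Prod>i\<in>{i \<in> {0..<n}. z i = a}. w (z i)) = w a ^ n_cnt n z a"
      by (simp add: n_cnt_def)
  qed simp
  finally show ?thesis by simp
qed

lemma sum_labels:
  assumes "(\<Sum>a=1..k. w a) = (1::real)"
  shows "(\<Sum>z\<in>labelings k n. \<Prod>a\<in>{1..k}. w a ^ n_cnt n z a) = 1"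
proof -
  have "(\<Sum>z\<in>labelings k n. \<Prod>a\<in>{1..k}. w a ^ n_cnt n z a) = (\<Sum>z\<in>labelings k n. \<Prod>i\<in>{0..<n}. w (z i))"
    by (rule sum.cong[OF refl], rule labels_prod)
  also have "\<dots> = (\<Prod>i\<in>{0..<n}. \<Sum>a\<in>{1..k}. w a)"
    unfolding labelings_def by (rule prod_sum_PiE[symmetric]) auto
  finally show ?thesis using assms by simp
qed

lemma finite_labelings[simp]: "finite (labelings k n)"
  unfolding labelings_def by (intro finite_PiE) auto

lemma joint_matu:
  assumes th: "(w, P) \<in> Theta k" and z: "z \<in> labelings k n"
  shows "sbm_joint k w P n z (matu u) = (\<Prod>a\<in>{1..k}. w a ^ n_cnt n z a) *
     (\<Prod>p\<in>Up n. if u p then P (z (fst p)) (z (snd p)) else 1 - P (z (fst p)) (z (snd p)))"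
  unfolding sbm_joint_def
  by (subst joint_pairs[OF z]) (use th in \<open>auto simp: Theta_def\<close>)

lemma total_marg:
  assumes th: "(w, P) \<in> Theta k"
  shows "(\<Sum>u\<in>UU n. sbm_marg k w P n (matu u)) = 1"
proof -
  have "(\<Sum>u\<in>UU n. sbm_marg k w P n (matu u)) = (\<Sum>z\<in>labelings k n. \<Sum>u\<in>UU n. sbm_joint k w P n z (matu u))"
    unfolding sbm_marg_def by (rule sum.swap)
  also have "\<dots> = (\<Sum>z\<in>labelings k n. (\<Prod>a\<in>{1..k}. w a ^ n_cnt n z a) *
     (\<Sum>u\<in>UU n. \<Prod>p\<in>Up n. if u p then P (z (fst p)) (z (snd p)) else 1 - P (z (fst p)) (z (snd p))))"
    by (rule sum.cong) (auto simp: joint_matu[OF th] sum_distrib_left)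
  also have "\<dots> = (\<Sum>z\<in>labelings k n. \<Prod>a\<in>{1..k}. w a ^ n_cnt n z a)"
    by (simp add: sum_pairs)
  also have "\<dots> = 1" using th by (intro sum_labels) (auto simp: Theta_def)
  finally show ?thesis .
qed

lemma joint_nonneg:
  assumes th: "(w, P) \<in> Theta k"
  shows "sbm_joint k w P n z x \<ge> 0"
  using th unfolding sbm_joint_def Theta_def
  by (auto intro!: mult_nonneg_nonneg prod_nonneg pow0_nonneg)

lemma marg_nonneg:
  assumes th: "(w, P) \<in> Theta k"
  shows "sbm_marg k w P n x \<ge> 0"
  unfolding sbm_marg_def using joint_nonneg[OF th] by (auto intro!: sum_nonneg)

lemma marg_le1:
  assumes th: "(w, P) \<in> Theta k" and u: "u \<in> UU n"
  shows "sbm_marg k w P n (matu u) \<le> 1"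
proof -
  have "sbm_marg k w P n (matu u) \<le> (\<Sum>u\<in>UU n. sbm_marg k w P n (matu u))"
    using u marg_nonneg[OF th] by (intro member_le_sum) auto
  then show ?thesis using total_marg[OF th] by simp
qed

definition resU :: "nat \<Rightarrow> (nat \<Rightarrow> nat \<Rightarrow> bool) \<Rightarrow> (nat \<times> nat \<Rightarrow> bool)" where
  "resU n x = restrict (\<lambda>p. x (fst p) (snd p)) (Up n)"

lemma resU_UU: "resU n x \<in> UU n"
  by (simp add: resU_def UU_def)

lemma adj_resU: "adj_matrix n x \<Longrightarrow> i < n \<Longrightarrow> j < n \<Longrightarrow> matu (resU n x) i j = x i j"
  by (auto simp: adj_matrix_def matu_def resU_def Up_def)

lemma resU_matu: assumes u: "u \<in> UU n" shows "resU n (matu u) = u"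
proof
  fix p :: "nat \<times> nat"
  show "resU n (matu u) p = u p"
  proof (cases "p \<in> Up n")
    case True then show ?thesis by (cases p) (auto simp: resU_def matu_def Up_def)
  next
    case False then show ?thesis using PiE_arb[OF u[unfolded UU_def] False] by (simp add: resU_def)
  qed
qed

lemma matu_inj: "u \<in> UU n \<Longrightarrow> v \<in> UU n \<Longrightarrow> (\<forall>i<n. \<forall>j<n. matu u i j = matu v i j) \<Longrightarrow> u = v"
proof -
  assume a: "u \<in> UU n" "v \<in> UU n" "\<forall>i<n. \<forall>j<n. matu u i j = matu v i j"
  have "resU n (matu u) = resU n (matu v)"
    unfolding resU_def using a(3) by (intro restrict_ext) (auto simp: Up_def)
  then show ?thesis using a resU_matu by metis
qed

definition agree :: "nat \<Rightarrow> (nat \<Rightarrow> nat \<Rightarrow> bool) \<Rightarrow> (nat \<Rightarrow> nat \<Rightarrow> bool) \<Rightarrow> bool" where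
  "agree n x y \<longleftrightarrow> (\<forall>i<n. \<forall>j<n. x i j = y i j)"

lemma O_cnt_agree: "agree n x y \<Longrightarrow> O_cnt n z x a b = O_cnt n z y a b"
  unfolding O_cnt_def agree_def by (rule arg_cong[where f=card]) auto

lemma marg_agree: "agree n x y \<Longrightarrow> sbm_marg k w P n x = sbm_marg k w P n y"
  unfolding sbm_marg_def sbm_joint_def by (intro sum.cong refl arg_cong2[where f="(*)"] prod.cong) (simp_all add: O_cnt_agree)

lemma KT_agree: "agree n x y \<Longrightarrow> KT k n x = KT k n y"
proof -
  assume "agree n x y"
  then have "\<And>p q. sbm_marg k p q n x = sbm_marg k p q n y" by (rule marg_agree)
  then show ?thesis unfolding KT_def by presburger
qed

lemma kKT_agree: "agree n x y \<Longrightarrow> k_KT e n x = k_KT e n y"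
proof -
  assume "agree n x y"
  then have "\<And>k. KT k n x = KT k n y" by (rule KT_agree)
  then show ?thesis unfolding k_KT_def kt_score_def by presburger
qed

lemma agree_resU: "adj_matrix n x \<Longrightarrow> agree n x (matu (resU n x))"
  by (simp add: agree_def adj_resU)



lemma nn_integral_superadd:
  "integral\<^sup>N M f + integral\<^sup>N M g \<le> (\<integral>\<^sup>+x. f x + g x \<partial>M)"
proof -
  let ?X = "\<integral>\<^sup>+x. f x + g x \<partial>M"
  have key: "integral\<^sup>S M s1 + integral\<^sup>S M s2 \<le> ?X"
    if s1: "simple_function M s1" "s1 \<le> f" and s2: "simple_function M s2" "s2 \<le> g" for s1 s2
  proof -
    have "integral\<^sup>S M s1 + integral\<^sup>S M s2 = (\<integral>\<^sup>Sx. s1 x + s2 x \<partial>M)"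
      using s1 s2 by (simp add: simple_integral_add)
    also have "\<dots> = (\<integral>\<^sup>+x. s1 x + s2 x \<partial>M)"
      using s1 s2 by (simp add: nn_integral_eq_simple_integral simple_function_add)
    also have "\<dots> \<le> ?X"
      using s1 s2 by (intro nn_integral_mono add_mono) (auto simp: le_fun_def)
    finally show ?thesis .
  qed
  have ne1: "{s. simple_function M s \<and> s \<le> g} \<noteq> {}"
  proof -
    have "(\<lambda>_. 0) \<in> {s. simple_function M s \<and> s \<le> g}" by (auto simp: le_fun_def)
    then show ?thesis by blast
  qed
  have ne2: "{s. simple_function M s \<and> s \<le> f} \<noteq> {}"
  proof -
    have "(\<lambda>_. 0) \<in> {s. simple_function M s \<and> s \<le> f}" by (auto simp: le_fun_def)
    then show ?thesis by blast
  qed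
  have step: "integral\<^sup>S M s1 + integral\<^sup>N M g \<le> ?X"
    if s1: "simple_function M s1" "s1 \<le> f" for s1
  proof -
    have "integral\<^sup>S M s1 + integral\<^sup>N M g =
       (SUP s2\<in>{s. simple_function M s \<and> s \<le> g}. integral\<^sup>S M s1 + integral\<^sup>S M s2)"
      unfolding nn_integral_def by (rule ennreal_SUP_add_right[OF ne1])
    also have "\<dots> \<le> ?X" by (rule SUP_least) (use key s1 in auto)
    finally show ?thesis .
  qed
  have "integral\<^sup>N M f + integral\<^sup>N M g =
       (SUP s1\<in>{s. simple_function M s \<and> s \<le> f}. integral\<^sup>S M s1 + integral\<^sup>N M g)"
    unfolding nn_integral_def[of M f] by (rule ennreal_SUP_add_left[symmetric, OF ne2])
  also have "\<dots> \<le> ?X" by (rule SUP_least) (use step in auto)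
  finally show ?thesis .
qed

lemma nn_integral_superadd_sum:
  assumes "finite S"
  shows "(\<Sum>s\<in>S. integral\<^sup>N M (f s)) \<le> (\<integral>\<^sup>+x. (\<Sum>s\<in>S. f s x) \<partial>M)"
  using assms
proof (induction S rule: finite_induct)
  case empty then show ?case by simp
next
  case (insert a F)
  have "(\<Sum>s\<in>insert a F. integral\<^sup>N M (f s)) = integral\<^sup>N M (f a) + (\<Sum>s\<in>F. integral\<^sup>N M (f s))"
    using insert by simp
  also have "\<dots> \<le> integral\<^sup>N M (f a) + (\<integral>\<^sup>+x. (\<Sum>s\<in>F. f s x) \<partial>M)"
    using insert by (intro add_left_mono)
  also have "\<dots> \<le> (\<integral>\<^sup>+x. f a x + (\<Sum>s\<in>F. f s x) \<partial>M)"
    by (rule nn_integral_superadd)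
  also have "\<dots> = (\<integral>\<^sup>+x. (\<Sum>s\<in>insert a F. f s x) \<partial>M)"
    using insert by simp
  finally show ?case .
qed

abbreviation PP :: "nat \<Rightarrow> (nat \<Rightarrow> real) measure" where
  "PP k \<equiv> PiM {1..<k} (\<lambda>_. lborel)"
abbreviation PQ :: "nat \<Rightarrow> (nat \<times> nat \<Rightarrow> real) measure" where
  "PQ k \<equiv> PiM (upper_idx k) (\<lambda>_. lborel)"

definition gI where
  "gI k n x p q = ennreal (indicator (Theta k) (pi_of k p, P_of q) *
                 sbm_marg k (pi_of k p) (P_of q) n x * kt_prior k (pi_of k p) (P_of q))"

definition II where
  "II k n x = (\<integral>\<^sup>+ p. \<integral>\<^sup>+ q. gI k n x p q \<partial>PQ k \<partial>PP k)"

lemma KT_II: "KT k n x = enn2real (II k n x)"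
  unfolding KT_def II_def gI_def ..

definition Bint where
  "Bint k = (\<integral>\<^sup>+ p. \<integral>\<^sup>+ q. ennreal (indicator (Theta k) (pi_of k p, P_of q) * kt_prior k (pi_of k p) (P_of q)) \<partial>PQ k \<partial>PP k)"

lemma Gamma_half_nat_nonneg: "Gamma (real k / 2) \<ge> 0"
proof (cases "k = 0")
  case True then show ?thesis by simp
next
  case False then show ?thesis by (intro less_imp_le Gamma_real_pos) simp
qed

lemma kt_prior_nonneg: "kt_prior k w P \<ge> 0"
  unfolding kt_prior_def
  by (intro mult_nonneg_nonneg prod_nonneg divide_nonneg_nonneg Gamma_half_nat_nonneg)
     (auto simp: case_prod_beta intro!: mult_nonneg_nonneg)

lemma sum_II_le: "(\<Sum>u\<in>UU n. II k n (matu u)) \<le> Bint k"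
proof -
  have "(\<Sum>u\<in>UU n. II k n (matu u)) \<le> (\<integral>\<^sup>+ p. (\<Sum>u\<in>UU n. \<integral>\<^sup>+ q. gI k n (matu u) p q \<partial>PQ k) \<partial>PP k)"
    unfolding II_def by (rule nn_integral_superadd_sum) simp
  also have "\<dots> \<le> (\<integral>\<^sup>+ p. \<integral>\<^sup>+ q. (\<Sum>u\<in>UU n. gI k n (matu u) p q) \<partial>PQ k \<partial>PP k)"
    by (intro nn_integral_mono nn_integral_superadd_sum) simp
  also have "\<dots> = Bint k"
    unfolding Bint_def
  proof (intro nn_integral_cong)
    fix p q
    show "(\<Sum>u\<in>UU n. gI k n (matu u) p q) =
      ennreal (indicator (Theta k) (pi_of k p, P_of q) * kt_prior k (pi_of k p) (P_of q))"
    proof (cases "(pi_of k p, P_of q) \<in> Theta k")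
      case True
      have "(\<Sum>u\<in>UU n. gI k n (matu u) p q) = ennreal (\<Sum>u\<in>UU n. sbm_marg k (pi_of k p) (P_of q) n (matu u) * kt_prior k (pi_of k p) (P_of q))"
        unfolding gI_def using True marg_nonneg[OF True] kt_prior_nonneg
        by (subst sum_ennreal[symmetric]) (auto intro!: sum.cong)
      also have "\<dots> = ennreal (kt_prior k (pi_of k p) (P_of q))"
        by (simp add: sum_distrib_right[symmetric] total_marg[OF True])
      finally show ?thesis using True by simp
    next
      case False then show ?thesis by (simp add: gI_def)
    qed
  qed
  finally show ?thesis .
qed



definition wfun :: "real \<Rightarrow> real" where
  "wfun t = indicator {0<..<1} t * (t powr (-1/2) * (1 - t) powr (-1/2))"

definition vfun :: "real \<Rightarrow> real" where
  "vfun t = indicator {0<..<1} t * t powr (-1/2)"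

lemma wfun_meas[measurable]: "wfun \<in> borel_measurable borel"
  unfolding wfun_def by measurable

lemma vfun_meas[measurable]: "vfun \<in> borel_measurable borel"
  unfolding vfun_def by measurable

lemma wfun_nonneg: "wfun t \<ge> 0" by (simp add: wfun_def)
lemma vfun_nonneg: "vfun t \<ge> 0" by (simp add: vfun_def)

lemma int_wfun: "(\<integral>\<^sup>+t. ennreal (wfun t) \<partial>lborel) = ennreal (Beta (1/2) (1/2))"
proof -
  have h: "((\<lambda>t. t powr (1/2 - 1) * (1 - t) powr (1/2 - 1)) has_integral Beta (1/2) (1/2)) {0..(1::real)}"
    by (rule has_integral_Beta_real) auto
  have "(\<integral>\<^sup>+t. ennreal (wfun t) \<partial>lborel) =
      (\<integral>\<^sup>+t. ennreal (t powr (1/2 - 1) * (1 - t) powr (1/2 - 1)) * indicator {0..1} t \<partial>lborel)"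
    by (intro nn_integral_cong) (auto simp: wfun_def indicator_def)
  also have "\<dots> = ennreal (Beta (1/2) (1/2))"
    by (rule nn_integral_has_integral_lebesgue'[OF _ h]) auto
  finally show ?thesis .
qed

lemma int_vfun: "(\<integral>\<^sup>+t. ennreal (vfun t) \<partial>lborel) \<le> ennreal (Beta (1/2) 1)"
proof -
  have h: "((\<lambda>t. t powr (1/2 - 1) * (1 - t) powr (1 - 1)) has_integral Beta (1/2) 1) {0..(1::real)}"
    by (rule has_integral_Beta_real) auto
  have "(\<integral>\<^sup>+t. ennreal (vfun t) \<partial>lborel) \<le>
      (\<integral>\<^sup>+t. ennreal (t powr (1/2 - 1) * (1 - t) powr (1 - 1)) * indicator {0..1} t \<partial>lborel)"
    by (intro nn_integral_mono) (auto simp: vfun_def indicator_def)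
  also have "\<dots> = ennreal (Beta (1/2) 1)"
    by (rule nn_integral_has_integral_lebesgue'[OF _ h]) auto
  finally show ?thesis .
qed

definition jfun :: "real \<Rightarrow> real \<Rightarrow> real" where
  "jfun c y = indicator {0<..<c} y * (y powr (-1/2) * (c - y) powr (-1/2))"

lemma jfun_meas[measurable]: "jfun c \<in> borel_measurable borel"
  unfolding jfun_def by measurable

lemma int_jfun: "(\<integral>\<^sup>+y. ennreal (jfun c y) \<partial>lborel) \<le> ennreal (Beta (1/2) (1/2))"
proof (cases "c > 0")
  case False
  then have "\<And>y. jfun c y = 0" by (auto simp: jfun_def indicator_def)
  then show ?thesis by simp
next
  case True
  have "(\<integral>\<^sup>+y. ennreal (jfun c y) \<partial>lborel) = \<bar>c\<bar> * (\<integral>\<^sup>+x. ennreal (jfun c (0 + c * x)) \<partial>lborel)"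
    using True by (intro nn_integral_real_affine) auto
  also have "(\<lambda>x. ennreal (jfun c (0 + c * x))) = (\<lambda>x. ennreal (1 / c) * ennreal (wfun x))"
  proof
    fix x
    show "ennreal (jfun c (0 + c * x)) = ennreal (1 / c) * ennreal (wfun x)"
    proof (cases "0 < x \<and> x < 1")
      case True
      have a: "(c * x) powr e = c powr e * x powr e" for e
        using \<open>c > 0\<close> True by (simp add: powr_mult)
      have b: "(c - c * x) powr e = c powr e * (1 - x) powr e" for e
        using \<open>c > 0\<close> True by (simp add: powr_mult[symmetric] right_diff_distrib)
      have cc: "c powr (-1/2) * c powr (-1/2) = 1 / c"
        using \<open>c > 0\<close> by (simp add: powr_add[symmetric] powr_minus_divide)
      have "jfun c (0 + c * x) = (c powr (-1/2) * c powr (-1/2)) * wfun x"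
        using True \<open>c > 0\<close> by (simp add: jfun_def wfun_def indicator_def a b mult_ac)
      then have "jfun c (0 + c * x) = (1 / c) * wfun x" by (simp only: cc)
      then show ?thesis using \<open>c > 0\<close> wfun_nonneg[of x] by (simp add: ennreal_mult[symmetric] divide_inverse mult.commute)
    next
      case False
      then have "\<not> (0 < c * x \<and> c * x < c)" using \<open>c > 0\<close>
        by (auto simp: mult_less_cancel_left1 zero_less_mult_iff)
      then show ?thesis using False by (auto simp: jfun_def wfun_def indicator_def)
    qed
  qed
  also have "\<bar>c\<bar> * (\<integral>\<^sup>+x. ennreal (1 / c) * ennreal (wfun x) \<partial>lborel) = ennreal (Beta (1/2) (1/2))"
  proof -
    have e: "ennreal c * ennreal (1 / c) = 1" using True by (simp flip: ennreal_mult)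
    show ?thesis using True by (simp add: nn_integral_cmult int_wfun mult.assoc[symmetric] e)
  qed
  finally show ?thesis by simp
qed



definition Simp :: "nat \<Rightarrow> (nat \<Rightarrow> real) set" where
  "Simp k = {p. (\<forall>a\<in>{1..<k}. 0 < p a) \<and> (\<Sum>c\<in>{1..<k}. p c) < 1}"

definition GG :: "nat \<Rightarrow> real" where
  "GG k = Gamma (real k / 2) / Gamma (1/2) ^ k"

definition hp :: "nat \<Rightarrow> (nat \<Rightarrow> real) \<Rightarrow> ennreal" where
  "hp k p = ennreal (indicator (Simp k) p * (GG k * (\<Prod>a\<in>{1..<k}. p a powr (-1/2)) *
                (1 - (\<Sum>c\<in>{1..<k}. p c)) powr (-1/2)))"

definition hq :: "nat \<Rightarrow> (nat \<times> nat \<Rightarrow> real) \<Rightarrow> ennreal" where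
  "hq k q = (\<Prod>ab\<in>upper_idx k. ennreal (wfun (q ab) / Gamma (1/2) ^ 2))"

lemma GG_nonneg: "GG k \<ge> 0"
  unfolding GG_def using Gamma_half_nat_nonneg by simp

lemma hp_meas: "hp k \<in> borel_measurable (PP k)"
proof -
  have s: "{p \<in> space (PP k). p \<in> Simp k} \<in> sets (PP k)"
    unfolding Simp_def by measurable
  have "(\<lambda>p. indicator (Simp k) p :: real) \<in> borel_measurable (PP k)"
    using s by (subst measurable_cong[where g="indicator {p \<in> space (PP k). p \<in> Simp k}"])
       (auto simp: indicator_def)
  then show ?thesis unfolding hp_def by measurable
qed

lemma hq_meas: "hq k \<in> borel_measurable (PQ k)"
  unfolding hq_def by measurable

lemma prior_le:
  assumes k: "k \<ge> 1"
  shows "ennreal (indicator (Theta k) (pi_of k p, P_of q) * kt_prior k (pi_of k p) (P_of q)) \<le> hp k p * hq k q"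
proof (cases "(pi_of k p, P_of q) \<in> Theta k")
  case False then show ?thesis by simp
next
  case True
  have ins: "{1..k} = insert k {1..<k}" using k by auto
  have pk: "pi_of k p k = 1 - (\<Sum>c\<in>{1..<k}. p c)" by (simp add: pi_of_def)
  have pa: "pi_of k p a = p a" if "a \<in> {1..<k}" for a using that by (simp add: pi_of_def)
  have pos: "0 < pi_of k p a" if "a \<in> {1..k}" for a using True that by (auto simp: Theta_def)
  have inS: "p \<in> Simp k"
  proof -
    have "0 < p a" if "a \<in> {1..<k}" for a using pos[of a] pa[OF that] that by auto
    moreover have "(\<Sum>c\<in>{1..<k}. p c) < 1" using pos[of k] k pk by auto
    ultimately show ?thesis by (auto simp: Simp_def)
  qed
  have f1: "GG k * (\<Prod>a\<in>{1..k}. pi_of k p a powr (-1/2)) =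
    indicator (Simp k) p * (GG k * (\<Prod>a\<in>{1..<k}. p a powr (-1/2)) * (1 - (\<Sum>c\<in>{1..<k}. p c)) powr (-1/2))"
  proof -
    have pi: "(\<Prod>a\<in>{1..k}. f a) = f k * (\<Prod>a\<in>{1..<k}. f a)" for f :: "nat \<Rightarrow> real"
      unfolding ins by (subst prod.insert) auto
    have "(\<Prod>a\<in>{1..<k}. pi_of k p a powr (-1/2)) = (\<Prod>a\<in>{1..<k}. p a powr (-1/2))"
      by (rule prod.cong) (auto simp: pa)
    then show ?thesis using inS unfolding pi[of "\<lambda>a. pi_of k p a powr (-1/2)"] pk
      by (simp add: mult_ac)
  qed
  have f2: "(\<Prod>(a, b)\<in>{(a, b). 1 \<le> a \<and> a \<le> b \<and> b \<le> k}.
        1 / Gamma (1/2) ^ 2 * P_of q a b powr (-1/2) * (1 - P_of q a b) powr (-1/2))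
      = (\<Prod>ab\<in>upper_idx k. wfun (q ab) / Gamma (1/2) ^ 2)"
    unfolding upper_idx_def
  proof (rule prod.cong[OF refl])
    fix ab assume ab: "ab \<in> {(a, b). 1 \<le> a \<and> a \<le> b \<and> b \<le> k}"
    obtain a b where e: "ab = (a,b)" "1 \<le> a" "a \<le> b" "b \<le> k" using ab by auto
    have Pq: "P_of q a b = q (a,b)" using e by (simp add: P_of_def min_def max_def)
    have "a \<in> {1..k}" "b \<in> {1..k}" using e by auto
    then have "0 \<le> P_of q a b \<and> P_of q a b \<le> 1" using True unfolding Theta_def by blast
    then have r: "0 \<le> q (a,b)" "q (a,b) \<le> 1" using Pq by auto
    show "(case ab of (a, b) \<Rightarrow> 1 / Gamma (1/2) ^ 2 * P_of q a b powr (-1/2) * (1 - P_of q a b) powr (-1/2))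
        = wfun (q ab) / Gamma (1/2) ^ 2"
      using r unfolding e(1)
      by (cases "q (a,b) = 0"; cases "q (a,b) = 1") (auto simp: wfun_def indicator_def Pq)
  qed
  have "ennreal (indicator (Theta k) (pi_of k p, P_of q) * kt_prior k (pi_of k p) (P_of q)) =
     ennreal (GG k * (\<Prod>a\<in>{1..k}. pi_of k p a powr (-1/2))) *
     ennreal (\<Prod>ab\<in>upper_idx k. wfun (q ab) / Gamma (1/2) ^ 2)"
  proof -
    have "kt_prior k (pi_of k p) (P_of q) = (GG k * (\<Prod>a\<in>{1..k}. pi_of k p a powr (-1/2))) *
       (\<Prod>ab\<in>upper_idx k. wfun (q ab) / Gamma (1/2) ^ 2)"
      unfolding kt_prior_def f2[symmetric] GG_def by simp
    moreover have n1: "GG k * (\<Prod>a\<in>{1..k}. pi_of k p a powr (-1/2)) \<ge> 0"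
      by (intro mult_nonneg_nonneg GG_nonneg prod_nonneg) auto
    moreover have n2: "(\<Prod>ab\<in>upper_idx k. wfun (q ab) / Gamma (1/2) ^ 2) \<ge> 0"
      by (intro prod_nonneg) (simp add: wfun_nonneg)
    ultimately show ?thesis using True by (simp only: ennreal_mult[OF n1 n2, symmetric]) simp
  qed
  also have "\<dots> = hp k p * hq k q"
    unfolding hp_def hq_def f1
    by (subst prod_ennreal) (auto simp: wfun_nonneg)
  finally show ?thesis by simp
qed

lemma int_hq: "integral\<^sup>N (PQ k) (hq k) = ennreal (Beta (1/2) (1/2) / Gamma (1/2) ^ 2) ^ card (upper_idx k)"
proof -
  interpret product_sigma_finite "\<lambda>_::nat\<times>nat. lborel::real measure" by standard
  have fin: "finite (upper_idx k)"
    by (rule finite_subset[of _ "{..k}\<times>{..k}"]) (auto simp: upper_idx_def)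
  have "integral\<^sup>N (PQ k) (hq k) = (\<Prod>ab\<in>upper_idx k. \<integral>\<^sup>+t. ennreal (wfun t / Gamma (1/2) ^ 2) \<partial>lborel)"
    unfolding hq_def by (rule product_nn_integral_prod[OF fin]) simp
  also have "(\<integral>\<^sup>+t. ennreal (wfun t / Gamma (1/2) ^ 2) \<partial>lborel) = ennreal (Beta (1/2) (1/2) / Gamma (1/2) ^ 2)"
  proof -
    have "(\<integral>\<^sup>+t. ennreal (wfun t / Gamma (1/2) ^ 2) \<partial>lborel) = (\<integral>\<^sup>+t. ennreal (1 / Gamma (1/2) ^ 2) * ennreal (wfun t) \<partial>lborel)"
      by (intro nn_integral_cong) (simp add: ennreal_mult[symmetric] wfun_nonneg)
    also have "\<dots> = ennreal (1 / Gamma (1/2) ^ 2) * ennreal (Beta (1/2) (1/2))"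
      by (simp add: nn_integral_cmult int_wfun)
    also have "\<dots> = ennreal (Beta (1/2) (1/2) / Gamma (1/2) ^ 2)"
    proof -
      have "Beta (1/2) (1/2) \<ge> (0::real)"
        by (simp add: Beta_def)
      then show ?thesis by (simp add: ennreal_mult[symmetric])
    qed
    finally show ?thesis .
  qed
  finally show ?thesis by simp
qed

lemma int_hp2:
  assumes k: "k \<ge> 2"
  shows "integral\<^sup>N (PP k) (hp k) \<le> ennreal (GG k * Beta (1/2) (1/2)) * ennreal (Beta (1/2) 1) ^ (k - 2)"
proof -
  interpret product_sigma_finite "\<lambda>_::nat. lborel::real measure" by standard
  define m where "m = k - 1"
  define I where "I = {1..<m}"
  have Ik: "{1..<k} = insert m I" and mI: "m \<notin> I" and fI: "finite I" and cI: "card I = k - 2"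
    using k by (auto simp: m_def I_def)
  have meas: "hp k \<in> borel_measurable (PiM (insert m I) (\<lambda>_. lborel))"
    using hp_meas[of k] unfolding Ik .
  define r where "r x = (\<Sum>c\<in>I. x c)" for x :: "nat \<Rightarrow> real"
  define A where "A x = indicator {x. \<forall>a\<in>I. 0 < x a} x * (GG k * (\<Prod>a\<in>I. x a powr (-1/2)))" for x :: "nat \<Rightarrow> real"
  have A_nonneg: "A x \<ge> 0" for x unfolding A_def by (auto intro!: mult_nonneg_nonneg GG_nonneg prod_nonneg)
  have "integral\<^sup>N (PP k) (hp k) = (\<integral>\<^sup>+x. (\<integral>\<^sup>+y. hp k (x(m:=y)) \<partial>lborel) \<partial>PiM I (\<lambda>_. lborel))"
    unfolding Ik by (rule product_nn_integral_insert[OF fI mI meas])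
  also have "\<dots> \<le> (\<integral>\<^sup>+x. ennreal (GG k * Beta (1/2) (1/2)) * (\<Prod>a\<in>I. ennreal (vfun (x a))) \<partial>PiM I (\<lambda>_. lborel))"
  proof (rule nn_integral_mono)
    fix x :: "nat \<Rightarrow> real"
    have eq: "hp k (x(m:=y)) = ennreal (A x) * ennreal (jfun (1 - r x) y)" for y
    proof -
      have p1: "(\<Prod>a\<in>{1..<k}. (x(m:=y)) a powr (-1/2)) = y powr (-1/2) * (\<Prod>a\<in>I. x a powr (-1/2))"
      proof -
        have q1: "(\<Prod>a\<in>I. (x(m:=y)) a powr (-1/2)) = (\<Prod>a\<in>I. x a powr (-1/2))"
          by (rule prod.cong) (use mI in auto)
        show ?thesis unfolding Ik by (subst prod.insert[OF fI mI]) (simp only: q1 fun_upd_same)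
      qed
      have s1: "(\<Sum>c\<in>{1..<k}. (x(m:=y)) c) = y + r x"
      proof -
        have q1: "(\<Sum>a\<in>I. (x(m:=y)) a) = (\<Sum>a\<in>I. x a)"
          by (rule sum.cong) (use mI in auto)
        show ?thesis unfolding Ik r_def by (subst sum.insert[OF fI mI]) (simp only: q1 fun_upd_same)
      qed
      have inS: "(x(m:=y) \<in> Simp k) \<longleftrightarrow> (\<forall>a\<in>I. 0 < x a) \<and> 0 < y \<and> y < 1 - r x"
        unfolding Simp_def using s1 Ik mI by auto
      have jn: "jfun (1 - r x) y \<ge> 0" by (simp add: jfun_def)
      have "hp k (x(m:=y)) = ennreal (A x * jfun (1 - r x) y)"
        unfolding hp_def A_def jfun_def p1 s1 using inS by (auto simp: indicator_def algebra_simps)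
      then show ?thesis by (simp add: ennreal_mult A_nonneg jn)
    qed
    have "(\<integral>\<^sup>+y. hp k (x(m:=y)) \<partial>lborel) = ennreal (A x) * (\<integral>\<^sup>+y. ennreal (jfun (1 - r x) y) \<partial>lborel)"
      unfolding eq by (rule nn_integral_cmult) simp
    also have "\<dots> \<le> ennreal (GG k * Beta (1/2) (1/2)) * (\<Prod>a\<in>I. ennreal (vfun (x a)))"
    proof (cases "r x < 1 \<and> (\<forall>a\<in>I. 0 < x a)")
      case True
      have "A x \<le> GG k * (\<Prod>a\<in>I. vfun (x a))"
      proof -
        have "x a < 1" if "a \<in> I" for a
        proof -
          have "x a \<le> r x" unfolding r_def using True that fI
            by (intro member_le_sum) (auto intro: less_imp_le)
          then show ?thesis using True by simp
        qed
        then have "(\<Prod>a\<in>I. x a powr (-1/2)) = (\<Prod>a\<in>I. vfun (x a))"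
          using True by (intro prod.cong) (auto simp: vfun_def indicator_def)
        then show ?thesis using True by (simp add: A_def)
      qed
      then have "ennreal (A x) \<le> ennreal (GG k) * (\<Prod>a\<in>I. ennreal (vfun (x a)))"
        by (subst prod_ennreal) (auto simp: vfun_nonneg ennreal_mult[symmetric] GG_nonneg prod_nonneg intro!: ennreal_leI)
      moreover have "(\<integral>\<^sup>+y. ennreal (jfun (1 - r x) y) \<partial>lborel) \<le> ennreal (Beta (1/2) (1/2))"
        by (rule int_jfun)
      ultimately have "ennreal (A x) * (\<integral>\<^sup>+y. ennreal (jfun (1 - r x) y) \<partial>lborel) \<le>
          (ennreal (GG k) * (\<Prod>a\<in>I. ennreal (vfun (x a)))) * ennreal (Beta (1/2) (1/2))"
        by (rule mult_mono) auto
      also have "\<dots> = ennreal (GG k * Beta (1/2) (1/2)) * (\<Prod>a\<in>I. ennreal (vfun (x a)))"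
        by (simp add: ennreal_mult GG_nonneg Beta_def mult_ac)
      finally show ?thesis .
    next
      case False
      note nf = False
      show ?thesis
      proof (cases "r x < 1")
        case False
        then have "\<And>y. jfun (1 - r x) y = 0" by (auto simp: jfun_def indicator_def)
        then show ?thesis by simp
      next
        case True
        then have "\<not> (\<forall>a\<in>I. 0 < x a)" using nf by blast
        then have "A x = 0" by (auto simp: A_def indicator_def)
        then show ?thesis by simp
      qed
    qed
    finally show "(\<integral>\<^sup>+y. hp k (x(m:=y)) \<partial>lborel) \<le> ennreal (GG k * Beta (1/2) (1/2)) * (\<Prod>a\<in>I. ennreal (vfun (x a)))" .
  qed
  also have "\<dots> = ennreal (GG k * Beta (1/2) (1/2)) * (\<Prod>a\<in>I. \<integral>\<^sup>+t. ennreal (vfun t) \<partial>lborel)"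
  proof -
    have "(\<integral>\<^sup>+x. (\<Prod>a\<in>I. ennreal (vfun (x a))) \<partial>PiM I (\<lambda>_. lborel)) = (\<Prod>a\<in>I. \<integral>\<^sup>+t. ennreal (vfun t) \<partial>lborel)"
      by (rule product_nn_integral_prod[OF fI]) simp
    then show ?thesis by (subst nn_integral_cmult) auto
  qed
  also have "\<dots> \<le> ennreal (GG k * Beta (1/2) (1/2)) * (\<Prod>a\<in>I. ennreal (Beta (1/2) 1))"
    by (intro mult_left_mono prod_mono_ennreal int_vfun) auto
  also have "\<dots> = ennreal (GG k * Beta (1/2) (1/2)) * ennreal (Beta (1/2) 1) ^ (k - 2)"
    by (simp add: cI)
  finally show ?thesis .
qed

lemma int_hp1: "integral\<^sup>N (PP 1) (hp 1) = 1"
proof -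
  have "hp 1 (\<lambda>_. undefined) = 1"
  proof -
    have g: "Gamma (1/2::real) > 0" by (rule Gamma_real_pos) simp
    then have gq: "Gamma (1/2::real) \<noteq> 0" by (metis less_irrefl)
    have "GG 1 = 1" unfolding GG_def using gq by simp
    then show ?thesis by (simp add: hp_def Simp_def)
  qed
  then show ?thesis by (simp add: PiM_empty nn_integral_count_space_finite)
qed

definition BB :: "nat \<Rightarrow> real" where
  "BB k = (if k = 1 then 1 else GG k * Beta (1/2) (1/2) * Beta (1/2) 1 ^ (k - 2)) *
          (Beta (1/2) (1/2) / Gamma (1/2) ^ 2) ^ card (upper_idx k)"

lemma Beta_nonneg: "a > 0 \<Longrightarrow> b > 0 \<Longrightarrow> Beta a b \<ge> (0::real)"
  by (simp add: Beta_def)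

lemma BB_nonneg: "BB k \<ge> 0"
  unfolding BB_def by (auto intro!: mult_nonneg_nonneg GG_nonneg Beta_nonneg zero_le_power divide_nonneg_nonneg)

lemma Bint_le: assumes k: "k \<ge> 1" shows "Bint k \<le> ennreal (BB k)"
proof -
  have "Bint k \<le> (\<integral>\<^sup>+ p. \<integral>\<^sup>+ q. hp k p * hq k q \<partial>PQ k \<partial>PP k)"
    unfolding Bint_def by (intro nn_integral_mono prior_le k)
  also have "\<dots> = (\<integral>\<^sup>+ p. hp k p * integral\<^sup>N (PQ k) (hq k) \<partial>PP k)"
    by (intro nn_integral_cong nn_integral_cmult hq_meas)
  also have "\<dots> = integral\<^sup>N (PP k) (hp k) * integral\<^sup>N (PQ k) (hq k)"
    by (intro nn_integral_multc hp_meas)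
  also have "\<dots> \<le> ennreal (BB k)"
  proof (cases "k = 1")
    case True
    then show ?thesis using int_hp1 by (simp add: int_hq BB_def ennreal_power Beta_nonneg)
  next
    case False
    then have k2: "k \<ge> 2" using k by auto
    have "integral\<^sup>N (PP k) (hp k) * integral\<^sup>N (PQ k) (hq k) \<le>
      (ennreal (GG k * Beta (1/2) (1/2)) * ennreal (Beta (1/2) 1) ^ (k - 2)) *
      ennreal (Beta (1/2) (1/2) / Gamma (1/2) ^ 2) ^ card (upper_idx k)"
      unfolding int_hq by (intro mult_right_mono int_hp2 k2) auto
    also have "\<dots> = ennreal (BB k)"
    proof -
      have m3: "ennreal (X*Y*Z) = ennreal X * ennreal Y * ennreal Z" if "X\<ge>0" "Y\<ge>0" "Z\<ge>0" for X Y Z :: real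
        using that by (simp add: ennreal_mult mult_nonneg_nonneg)
      have n1: "GG k * Beta (1/2) (1/2) \<ge> 0" by (intro mult_nonneg_nonneg GG_nonneg Beta_nonneg) auto
      have n2: "Beta (1/2) (1::real) \<ge> 0" by (intro Beta_nonneg) auto
      have n3: "Beta (1/2) (1/2) / Gamma (1/2) ^ 2 \<ge> (0::real)" by (intro divide_nonneg_nonneg Beta_nonneg) auto
      show ?thesis using False unfolding BB_def
        by (simp only: if_False m3[OF n1 zero_le_power[OF n2] zero_le_power[OF n3]] ennreal_power[OF n2] ennreal_power[OF n3])
    qed
    finally show ?thesis .
  qed
  finally show ?thesis .
qed

lemma II_le_Bint: "u \<in> UU n \<Longrightarrow> II k n (matu u) \<le> Bint k"
proof -
  assume u: "u \<in> UU n"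
  have "II k n (matu u) \<le> (\<Sum>u\<in>UU n. II k n (matu u))"
    using u by (intro member_le_sum) auto
  then show ?thesis using sum_II_le[of k n] by simp
qed

lemma II_fin: "k \<ge> 1 \<Longrightarrow> u \<in> UU n \<Longrightarrow> II k n (matu u) < top"
  using II_le_Bint[of u n k] Bint_le[of k]
  by (metis ennreal_less_top order.strict_trans1 order_trans)

lemma sum_KT_le: assumes k: "k \<ge> 1" shows "(\<Sum>u\<in>UU n. KT k n (matu u)) \<le> BB k"
proof -
  have "(\<Sum>u\<in>UU n. KT k n (matu u)) = enn2real (\<Sum>u\<in>UU n. II k n (matu u))"
    unfolding KT_II using II_fin[OF k] by (subst enn2real_sum) auto
  also have "\<dots> \<le> BB k"
    using sum_II_le[of k n] Bint_le[OF k] BB_nonneg by (intro enn2real_leI) auto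
  finally show ?thesis .
qed

lemma KT_nonneg: "KT k n x \<ge> 0"
  by (simp add: KT_def)

lemma KT_le_BB: assumes k: "k \<ge> 1" and u: "u \<in> UU n" shows "KT k n (matu u) \<le> BB k"
proof -
  have "KT k n (matu u) \<le> (\<Sum>u\<in>UU n. KT k n (matu u))"
    using u KT_nonneg by (intro member_le_sum) auto
  then show ?thesis using sum_KT_le[OF k, of n] by simp
qed



lemma one_minus_powr_ge:
  fixes y e :: real
  assumes "0 \<le> y" "y \<le> 1/2" "0 \<le> e" "e * y \<le> 1"
  shows "(1 - y) powr e \<ge> exp (-2)"
proof -
  have l: "ln (1 - y) \<ge> - 2 * y"
  proof -
    have h: "- y - 2 * y\<^sup>2 \<le> ln (1 - y)" using ln_one_minus_pos_lower_bound[of y] assms by auto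
    have "y * y \<le> y * (1/2)" using assms by (intro mult_left_mono) auto
    then have "- 2 * y \<le> - y - 2 * y\<^sup>2" by (simp add: power2_eq_square)
    then show ?thesis using h by linarith
  qed
  have "(1 - y) powr e = exp (e * ln (1 - y))"
    using assms by (simp add: powr_def)
  also have "e * ln (1 - y) \<ge> e * (- 2 * y)" using l assms by (intro mult_left_mono) auto
  then have "exp (e * ln (1 - y)) \<ge> exp (e * (-2 * y))" by simp
  moreover have "e * (-2 * y) \<ge> -2" using assms by linarith
  ultimately show ?thesis by (smt (verit) exp_le_cancel_iff)
qed

lemma pow0_one_minus_ge:
  fixes y e :: real
  assumes "0 \<le> y" "y \<le> 1/2" "0 \<le> e" "e * y \<le> 1"
  shows "pow0 (1 - y) e \<ge> exp (-2)"
  using one_minus_powr_ge[OF assms] by (auto simp: pow0_def)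

lemma pow0_mono: "0 \<le> a \<Longrightarrow> a \<le> b \<Longrightarrow> 0 \<le> e \<Longrightarrow> pow0 a e \<le> pow0 b e"
  by (auto simp: pow0_def intro: powr_mono2)

lemma pow0_mult: "0 \<le> a \<Longrightarrow> 0 \<le> b \<Longrightarrow> pow0 (a * b) e = pow0 a e * pow0 b e"
  by (auto simp: pow0_def powr_mult)

lemma pair_factor:
  fixes c x e1 e2 :: real and n :: nat
  assumes n: "n \<ge> 2" and c: "0 \<le> c" "c \<le> 1"
    and x: "(c \<le> 1/2 \<and> c < x \<and> x \<le> c + 1 / real n ^ 2) \<or> (c > 1/2 \<and> c - 1 / real n ^ 2 \<le> x \<and> x < c)"
    and e: "0 \<le> e1" "e1 \<le> real n ^ 2 / 2" "0 \<le> e2" "e2 \<le> real n ^ 2 / 2"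
  shows "pow0 x e1 * pow0 (1 - x) e2 \<ge> exp (-2) * (pow0 c e1 * pow0 (1 - c) e2)"
proof -
  have nn: "real n ^ 2 \<ge> 4"
  proof -
    have "real n \<ge> 2" using n by simp
    then have "real n ^ 2 \<ge> 2 ^ 2" by (rule power_mono) auto
    then show ?thesis by simp
  qed
  then have y: "0 \<le> 2 / real n ^ 2" "2 / real n ^ 2 \<le> 1/2" by (auto simp: divide_le_eq)
  have ey: "e * (2 / real n ^ 2) \<le> 1" if "0 \<le> e" "e \<le> real n ^ 2 / 2" for e
    using that nn by (auto simp: divide_le_eq)
  have small: "1 / real n ^ 2 \<le> 1/4" using nn by (auto simp: divide_le_eq)
  show ?thesis
  proof (cases "c \<le> 1/2")
    case True
    then have xx: "c < x" "x \<le> c + 1 / real n ^ 2" using x by auto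
    have a: "pow0 c e1 \<le> pow0 x e1" using xx c e by (intro pow0_mono) auto
    have b1: "(1 - c) * (1 - 2 / real n ^ 2) \<le> 1 - x"
    proof -
      define t where "t = 1 / real n ^ 2"
      have tt: "2 / real n ^ 2 = 2 * t" by (simp add: t_def)
      have t0: "0 \<le> (1 - 2 * c) * t" using True by (auto simp: t_def)
      have e1: "(1 - c) * (1 - 2 * t) = 1 - c - 2 * t + 2 * (c * t)" by (simp add: algebra_simps)
      have e2: "(1 - 2 * c) * t = t - 2 * (c * t)" by (simp add: algebra_simps)
      have xt: "x \<le> c + t" using xx by (simp add: t_def)
      show ?thesis unfolding tt e1 using e2 t0 xt by linarith
    qed
    have b: "pow0 (1 - c) e2 * pow0 (1 - 2 / real n ^ 2) e2 \<le> pow0 (1 - x) e2"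
      using b1 c y e by (subst pow0_mult[symmetric]) (auto intro!: pow0_mono)
    have b2: "pow0 (1 - 2 / real n ^ 2) e2 \<ge> exp (-2)"
      using y e ey by (intro pow0_one_minus_ge) auto
    have "exp (-2) * (pow0 c e1 * pow0 (1 - c) e2) \<le> pow0 c e1 * (pow0 (1 - c) e2 * pow0 (1 - 2 / real n ^ 2) e2)"
      using b2 c by (simp add: mult_ac mult_left_mono pow0_nonneg mult_nonneg_nonneg)
    also have "\<dots> \<le> pow0 x e1 * pow0 (1 - x) e2"
      using a b c xx y by (intro mult_mono) (auto intro!: pow0_nonneg mult_nonneg_nonneg)
    finally show ?thesis .
  next
    case False
    then have xx: "c - 1 / real n ^ 2 \<le> x" "x < c" using x by auto
    have a: "pow0 (1 - c) e2 \<le> pow0 (1 - x) e2" using xx c e by (intro pow0_mono) auto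
    have b1: "c * (1 - 2 / real n ^ 2) \<le> x"
    proof -
      define t where "t = 1 / real n ^ 2"
      have tt: "2 / real n ^ 2 = 2 * t" by (simp add: t_def)
      have t0: "0 \<le> (2 * c - 1) * t" using False by (auto simp: t_def)
      have e1: "c * (1 - 2 * t) = c - 2 * (c * t)" by (simp add: algebra_simps)
      have e2: "(2 * c - 1) * t = 2 * (c * t) - t" by (simp add: algebra_simps)
      have xt: "c - t \<le> x" using xx by (simp add: t_def)
      show ?thesis unfolding tt e1 using e2 t0 xt by linarith
    qed
    have b: "pow0 c e1 * pow0 (1 - 2 / real n ^ 2) e1 \<le> pow0 x e1"
      using b1 c y e by (subst pow0_mult[symmetric]) (auto intro!: pow0_mono)
    have b2: "pow0 (1 - 2 / real n ^ 2) e1 \<ge> exp (-2)"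
      using y e ey by (intro pow0_one_minus_ge) auto
    have "exp (-2) * (pow0 c e1 * pow0 (1 - c) e2) \<le> (pow0 c e1 * pow0 (1 - 2 / real n ^ 2) e1) * pow0 (1 - c) e2"
      using b2 c by (simp add: mult_ac mult_left_mono pow0_nonneg mult_nonneg_nonneg)
    also have "\<dots> \<le> pow0 x e1 * pow0 (1 - x) e2"
      using a b c xx y small False by (intro mult_mono) (auto intro!: pow0_nonneg mult_nonneg_nonneg)
    finally show ?thesis .
  qed
qed

lemma n_cnt_le: "n_cnt n z a \<le> n"
proof -
  have "n_cnt n z a \<le> card {..<n}" unfolding n_cnt_def by (rule card_mono) auto
  then show ?thesis by simp
qed

lemma n_pair_le: "n_pair n z a b \<le> n^2"
proof -
  have "n_cnt n z a * n_cnt n z b \<le> n * n" using n_cnt_le by (intro mult_le_mono) auto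
  moreover have "n_cnt n z a * (n_cnt n z a - 1) \<le> n * n"
    using n_cnt_le le_trans[OF diff_le_self n_cnt_le] by (intro mult_le_mono) auto
  ultimately show ?thesis by (auto simp: n_pair_def power2_eq_square)
qed



definition Iq :: "nat \<Rightarrow> real \<Rightarrow> real set" where
  "Iq n c = (if c \<le> 1/2 then {c<..c + 1 / real n ^ 2} else {c - 1 / real n ^ 2..<c})"

definition boxP :: "nat \<Rightarrow> nat \<Rightarrow> (nat \<Rightarrow> real) \<Rightarrow> (nat \<Rightarrow> real) set" where
  "boxP k n w1 = PiE {1..<k} (\<lambda>a. {w1 a * (1 - 1 / real n)<..w1 a})"

definition boxQ :: "nat \<Rightarrow> nat \<Rightarrow> (nat \<Rightarrow> nat \<Rightarrow> real) \<Rightarrow> (nat \<times> nat \<Rightarrow> real) set" where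
  "boxQ k n P1 = PiE (upper_idx k) (\<lambda>ab. Iq n (P1 (fst ab) (snd ab)))"

lemma box_props:
  assumes k: "k \<ge> 1" and th: "(w1, P1) \<in> Theta k" and n: "n \<ge> 2"
    and p: "p \<in> boxP k n w1" and q: "q \<in> boxQ k n P1"
  shows "\<forall>a\<in>{1..k}. w1 a * (1 - 1 / real n) \<le> pi_of k p a \<and> 0 < pi_of k p a \<and> pi_of k p a \<le> 1"
    and "(\<Sum>a=1..k. pi_of k p a) = 1"
    and "\<forall>a\<in>{1..k}. \<forall>b\<in>{1..k}. (P1 a b \<le> 1/2 \<and> P1 a b < P_of q a b \<and> P_of q a b \<le> P1 a b + 1 / real n ^ 2) \<or>
          (P1 a b > 1/2 \<and> P1 a b - 1 / real n ^ 2 \<le> P_of q a b \<and> P_of q a b < P1 a b)"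
    and "\<forall>a\<in>{1..k}. \<forall>b\<in>{1..k}. 0 < P_of q a b \<and> P_of q a b < 1 \<and> P_of q a b = P_of q b a"
proof -
  have w1: "0 < w1 a" "w1 a \<le> 1" if "a \<in> {1..k}" for a using th that by (auto simp: Theta_def)
  have P1: "0 \<le> P1 a b" "P1 a b \<le> 1" "P1 a b = P1 b a" if "a \<in> {1..k}" "b \<in> {1..k}" for a b
    using th that by (auto simp: Theta_def)
  have ws: "(\<Sum>a=1..k. w1 a) = 1" using th by (auto simp: Theta_def)
  have nn: "real n \<ge> 2" using n by simp
  have half: "1 - 1 / real n \<ge> 1/2" using nn by (auto simp: field_simps)
  have nn2: "real n ^ 2 \<ge> 4"
  proof -
    have "real n ^ 2 \<ge> 2 ^ 2" using nn by (intro power_mono) auto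
    then show ?thesis by simp
  qed
  have small: "1 / real n ^ 2 \<le> 1/4" using nn2 by (auto simp: divide_le_eq)
  have pa: "w1 a * (1 - 1 / real n) < p a \<and> p a \<le> w1 a" if "a \<in> {1..<k}" for a
    using p that by (auto simp: boxP_def PiE_def Pi_def)
  have pa_pos: "0 < p a" if "a \<in> {1..<k}" for a
  proof -
    have "0 < w1 a * (1 - 1 / real n)" using w1[of a] that half by (intro mult_pos_pos) auto
    then show ?thesis using pa[OF that] by linarith
  qed
  have sum_split: "(\<Sum>a=1..k. f a) = (\<Sum>a=1..<k. f a) + f k" for f :: "nat \<Rightarrow> real"
  proof -
    have "{1..k} = insert k {1..<k}" using k by auto
    then show ?thesis by (simp add: add.commute)
  qed
  have pk: "pi_of k p k = 1 - (\<Sum>c=1..<k. p c)" by (simp add: pi_of_def)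
  have pk_ge: "pi_of k p k \<ge> w1 k"
  proof -
    have "(\<Sum>c=1..<k. p c) \<le> (\<Sum>c=1..<k. w1 c)" using pa by (intro sum_mono) auto
    then show ?thesis using ws sum_split[of w1] pk by linarith
  qed
  have pk_le: "pi_of k p k \<le> 1"
  proof -
    have "0 \<le> (\<Sum>c=1..<k. p c)" using pa_pos by (intro sum_nonneg) (auto intro: less_imp_le)
    then show ?thesis using pk by simp
  qed
  show "\<forall>a\<in>{1..k}. w1 a * (1 - 1 / real n) \<le> pi_of k p a \<and> 0 < pi_of k p a \<and> pi_of k p a \<le> 1"
  proof
    fix a assume a: "a \<in> {1..k}"
    show "w1 a * (1 - 1 / real n) \<le> pi_of k p a \<and> 0 < pi_of k p a \<and> pi_of k p a \<le> 1"
    proof (cases "a < k")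
      case True
      then have a': "a \<in> {1..<k}" using a by auto
      then show ?thesis using pa[OF a'] pa_pos[OF a'] w1[OF a] True by (auto simp: pi_of_def)
    next
      case False
      then have ak: "a = k" using a by auto
      have h1: "w1 k * (1 - 1 / real n) \<le> w1 k" using w1[of k] k by (auto simp: mult_le_cancel_left1)
      have h2: "w1 k * (1 - 1 / real n) \<le> pi_of k p k" using order_trans[OF h1 pk_ge] .
      have h3: "0 < pi_of k p k" using w1[of k] k pk_ge by auto
      show ?thesis using ak h2 h3 pk_le by simp
    qed
  qed
  show "(\<Sum>a=1..k. pi_of k p a) = 1"
  proof -
    have "(\<Sum>a=1..<k. pi_of k p a) = (\<Sum>a=1..<k. p a)" by (rule sum.cong) (auto simp: pi_of_def)
    then show ?thesis using sum_split[of "pi_of k p"] pk by simp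
  qed
  have qab: "(P1 a b \<le> 1/2 \<and> P1 a b < P_of q a b \<and> P_of q a b \<le> P1 a b + 1 / real n ^ 2) \<or>
          (P1 a b > 1/2 \<and> P1 a b - 1 / real n ^ 2 \<le> P_of q a b \<and> P_of q a b < P1 a b)"
    if ab: "a \<in> {1..k}" "b \<in> {1..k}" for a b
  proof -
    have mm: "(min a b, max a b) \<in> upper_idx k" using ab by (auto simp: upper_idx_def)
    have "q (min a b, max a b) \<in> Iq n (P1 (min a b) (max a b))"
      using q mm by (auto simp: boxQ_def PiE_def Pi_def)
    moreover have "P1 (min a b) (max a b) = P1 a b"
      using P1(3)[OF ab] by (cases "a \<le> b") (auto simp: min_def max_def)
    ultimately have "q (min a b, max a b) \<in> Iq n (P1 a b)" by simp
    then show ?thesis by (auto simp: Iq_def P_of_def split: if_splits)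
  qed
  show "\<forall>a\<in>{1..k}. \<forall>b\<in>{1..k}. (P1 a b \<le> 1/2 \<and> P1 a b < P_of q a b \<and> P_of q a b \<le> P1 a b + 1 / real n ^ 2) \<or>
          (P1 a b > 1/2 \<and> P1 a b - 1 / real n ^ 2 \<le> P_of q a b \<and> P_of q a b < P1 a b)"
    using qab by blast
  show "\<forall>a\<in>{1..k}. \<forall>b\<in>{1..k}. 0 < P_of q a b \<and> P_of q a b < 1 \<and> P_of q a b = P_of q b a"
  proof (intro ballI conjI)
    fix a b assume ab: "a \<in> {1..k}" "b \<in> {1..k}"
    show "0 < P_of q a b" "P_of q a b < 1" using qab[OF ab] P1[OF ab] small by auto
    show "P_of q a b = P_of q b a" by (simp add: P_of_def min.commute max.commute)
  qed
qed

lemma box_Theta: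
  assumes k: "k \<ge> 1" and th: "(w1, P1) \<in> Theta k" and n: "n \<ge> 2"
    and p: "p \<in> boxP k n w1" and q: "q \<in> boxQ k n P1"
  shows "(pi_of k p, P_of q) \<in> Theta k"
  using box_props[OF assms] unfolding Theta_def by (auto intro: less_imp_le)

lemma prod_ge_const:
  fixes f g :: "'a \<Rightarrow> real"
  assumes "finite A" "\<And>a. a \<in> A \<Longrightarrow> 0 \<le> g a \<and> c * g a \<le> f a" "0 \<le> c"
  shows "c ^ card A * (\<Prod>a\<in>A. g a) \<le> (\<Prod>a\<in>A. f a)"
proof -
  have "c ^ card A * (\<Prod>a\<in>A. g a) = (\<Prod>a\<in>A. c * g a)"
    by (simp add: prod.distrib)
  also have "\<dots> \<le> (\<Prod>a\<in>A. f a)"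
    using assms by (intro prod_mono) (auto intro: mult_nonneg_nonneg)
  finally show ?thesis .
qed

lemma joint_ratio:
  assumes k: "k \<ge> 1" and th: "(w1, P1) \<in> Theta k" and n: "n \<ge> 2"
    and p: "p \<in> boxP k n w1" and q: "q \<in> boxQ k n P1"
  shows "exp (-2) ^ (k + k * k) * sbm_joint k w1 P1 n z (matu u) \<le> sbm_joint k (pi_of k p) (P_of q) n z (matu u)"
proof -
  note bp = box_props[OF assms]
  have w1: "0 < w1 a" "w1 a \<le> 1" if "a \<in> {1..k}" for a using th that by (auto simp: Theta_def)
  have P1: "0 \<le> P1 a b" "P1 a b \<le> 1" if "a \<in> {1..k}" "b \<in> {1..k}" for a b
    using th that by (auto simp: Theta_def)
  have nn: "real n \<ge> 2" using n by simp
  have e0: "0 \<le> exp (-2::real)" by simp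
  define A1 where "A1 = (\<Prod>a\<in>{1..k}. w1 a ^ n_cnt n z a)"
  define A where "A = (\<Prod>a\<in>{1..k}. pi_of k p a ^ n_cnt n z a)"
  define F where "F P a b = pow0 (P a b) (real (O_cnt n z (matu u) a b) / 2) *
        pow0 (1 - P a b) ((real (n_pair n z a b) - real (O_cnt n z (matu u) a b)) / 2)" for P :: "nat \<Rightarrow> nat \<Rightarrow> real" and a b
  have A_ge: "exp (-2) ^ k * A1 \<le> A"
  proof -
    have "exp (-2) ^ card {1..k} * A1 \<le> A" unfolding A1_def A_def
    proof (rule prod_ge_const)
      fix a assume a: "a \<in> {1..k}"
      define m where "m = n_cnt n z a"
      have mn: "m \<le> n" unfolding m_def by (rule n_cnt_le)
      have h1: "exp (-2) \<le> (1 - 1 / real n) ^ m"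
      proof -
        have "(1 - 1 / real n) powr real m \<ge> exp (-2)"
          using nn mn by (intro one_minus_powr_ge) (auto simp: field_simps)
        moreover have "(1 - 1 / real n) powr real m = (1 - 1 / real n) ^ m"
          using nn by (intro powr_realpow) (auto simp: field_simps)
        ultimately show ?thesis by simp
      qed
      have h2: "(w1 a * (1 - 1 / real n)) ^ m \<le> pi_of k p a ^ m"
        using bp(1) a w1[OF a] nn by (intro power_mono) (auto simp: field_simps)
      have "exp (-2) * w1 a ^ m \<le> (1 - 1 / real n) ^ m * w1 a ^ m"
        using h1 w1[OF a] by (intro mult_right_mono) auto
      also have "\<dots> = (w1 a * (1 - 1 / real n)) ^ m" by (simp add: power_mult_distrib)
      also have "\<dots> \<le> pi_of k p a ^ m" by (rule h2)
      finally show "0 \<le> w1 a ^ n_cnt n z a \<and> exp (-2) * w1 a ^ n_cnt n z a \<le> pi_of k p a ^ n_cnt n z a"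
        using w1[OF a] by (simp add: m_def)
    qed auto
    then show ?thesis by simp
  qed
  have F_ge: "exp (-2) * F P1 a b \<le> F (P_of q) a b" if ab: "a \<in> {1..k}" "b \<in> {1..k}" for a b
  proof -
    have O: "O_cnt n z (matu u) a b \<le> n_pair n z a b" by (rule O_le_pair)
    have np: "real (n_pair n z a b) \<le> real n ^ 2" using n_pair_le[of n z a b] by (simp add: of_nat_le_iff[symmetric])
    have O': "real (O_cnt n z (matu u) a b) \<le> real (n_pair n z a b)" using O by simp
    have x: "(P1 a b \<le> 1/2 \<and> P1 a b < P_of q a b \<and> P_of q a b \<le> P1 a b + 1 / real n ^ 2) \<or>
          (P1 a b > 1/2 \<and> P1 a b - 1 / real n ^ 2 \<le> P_of q a b \<and> P_of q a b < P1 a b)"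
      using bp(3) ab by blast
    have c1: "0 \<le> real (O_cnt n z (matu u) a b) / 2" by simp
    have c2: "real (O_cnt n z (matu u) a b) / 2 \<le> real n ^ 2 / 2" by (intro divide_right_mono) (use O' np in linarith)+
    have O0: "0 \<le> real (O_cnt n z (matu u) a b)" by simp
    have c3: "0 \<le> (real (n_pair n z a b) - real (O_cnt n z (matu u) a b)) / 2" using O' by simp
    have c4: "(real (n_pair n z a b) - real (O_cnt n z (matu u) a b)) / 2 \<le> real n ^ 2 / 2" by (intro divide_right_mono) (use O' np O0 in linarith)+
    show ?thesis unfolding F_def
      by (rule pair_factor[OF n P1(1,2)[OF ab] x c1 c2 c3 c4])
  qed
  have F1_nonneg: "0 \<le> F P1 a b" if ab: "a \<in> {1..k}" "b \<in> {1..k}" for a b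
    unfolding F_def using P1[OF ab] by (intro mult_nonneg_nonneg pow0_nonneg) auto
  have B_ge: "exp (-2) ^ (k * k) * (\<Prod>a\<in>{1..k}. \<Prod>b\<in>{1..k}. F P1 a b) \<le> (\<Prod>a\<in>{1..k}. \<Prod>b\<in>{1..k}. F (P_of q) a b)"
  proof -
    have "(exp (-2) ^ k) ^ card {1..k} * (\<Prod>a\<in>{1..k}. \<Prod>b\<in>{1..k}. F P1 a b) \<le> (\<Prod>a\<in>{1..k}. \<Prod>b\<in>{1..k}. F (P_of q) a b)"
    proof (rule prod_ge_const)
      fix a assume a: "a \<in> {1..k}"
      have "exp (-2) ^ card {1..k} * (\<Prod>b\<in>{1..k}. F P1 a b) \<le> (\<Prod>b\<in>{1..k}. F (P_of q) a b)"
        using F_ge F1_nonneg a by (intro prod_ge_const) auto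
      then show "0 \<le> (\<Prod>b\<in>{1..k}. F P1 a b) \<and> exp (-2) ^ k * (\<Prod>b\<in>{1..k}. F P1 a b) \<le> (\<Prod>b\<in>{1..k}. F (P_of q) a b)"
        using F1_nonneg a by (auto intro: prod_nonneg)
    qed auto
    then show ?thesis by (simp add: power_mult)
  qed
  have A1_nonneg: "0 \<le> A1" unfolding A1_def using w1 by (intro prod_nonneg) (auto intro: less_imp_le)
  have B1_nonneg: "0 \<le> (\<Prod>a\<in>{1..k}. \<Prod>b\<in>{1..k}. F P1 a b)" using F1_nonneg by (intro prod_nonneg) auto
  have "exp (-2) ^ (k + k * k) * sbm_joint k w1 P1 n z (matu u) =
     (exp (-2) ^ k * A1) * (exp (-2) ^ (k * k) * (\<Prod>a\<in>{1..k}. \<Prod>b\<in>{1..k}. F P1 a b))"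
    unfolding sbm_joint_def A1_def F_def by (simp add: power_add mult_ac)
  also have "\<dots> \<le> A * (\<Prod>a\<in>{1..k}. \<Prod>b\<in>{1..k}. F (P_of q) a b)"
  proof -
    have "0 \<le> exp (-2) ^ k * A1" using A1_nonneg by simp
    then have "0 \<le> A" using A_ge by linarith
    then show ?thesis using A_ge B_ge A1_nonneg B1_nonneg by (intro mult_mono) auto
  qed
  also have "\<dots> = sbm_joint k (pi_of k p) (P_of q) n z (matu u)"
    unfolding sbm_joint_def A_def F_def by simp
  finally show ?thesis .
qed

lemma marg_ratio:
  assumes k: "k \<ge> 1" and th: "(w1, P1) \<in> Theta k" and n: "n \<ge> 2"
    and p: "p \<in> boxP k n w1" and q: "q \<in> boxQ k n P1"
  shows "exp (-2) ^ (k + k * k) * sbm_marg k w1 P1 n (matu u) \<le> sbm_marg k (pi_of k p) (P_of q) n (matu u)"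
  unfolding sbm_marg_def sum_distrib_left by (intro sum_mono joint_ratio[OF assms])



lemma powr_neg_half_ge1: "0 < (x::real) \<Longrightarrow> x \<le> 1 \<Longrightarrow> 1 \<le> x powr (-1/2)"
  using powr_mono2'[of "-1/2" x 1] by simp

lemma prior_ge:
  assumes k: "k \<ge> 1" and th: "(w1, P1) \<in> Theta k" and n: "n \<ge> 2"
    and p: "p \<in> boxP k n w1" and q: "q \<in> boxQ k n P1"
  shows "GG k * (1 / Gamma (1/2) ^ 2) ^ card (upper_idx k) \<le> kt_prior k (pi_of k p) (P_of q)"
proof -
  note bp = box_props[OF assms]
  have g: "Gamma (1/2::real) > 0" by (rule Gamma_real_pos) simp
  have h1: "1 \<le> (\<Prod>a\<in>{1..k}. pi_of k p a powr (-1/2))"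
    using bp(1) by (intro prod_ge_1 powr_neg_half_ge1) auto
  have h2: "(1 / Gamma (1/2) ^ 2) ^ card (upper_idx k) \<le>
      (\<Prod>(a, b)\<in>{(a, b). 1 \<le> a \<and> a \<le> b \<and> b \<le> k}.
        1 / Gamma (1/2) ^ 2 * P_of q a b powr (-1/2) * (1 - P_of q a b) powr (-1/2))"
  proof -
    have "(1 / Gamma (1/2) ^ 2) ^ card (upper_idx k) = (\<Prod>ab\<in>upper_idx k. 1 / Gamma (1/2) ^ 2)"
      by simp
    also have "\<dots> \<le> (\<Prod>(a, b)\<in>upper_idx k.
        1 / Gamma (1/2) ^ 2 * P_of q a b powr (-1/2) * (1 - P_of q a b) powr (-1/2))"
    proof (rule prod_mono)
      fix ab assume ab: "ab \<in> upper_idx k"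
      obtain a b where e: "ab = (a,b)" "a \<in> {1..k}" "b \<in> {1..k}" using ab by (auto simp: upper_idx_def)
      have r: "0 < P_of q a b" "P_of q a b < 1" using bp(4) e by auto
      have h12: "1 \<le> P_of q a b powr (-1/2)" "1 \<le> (1 - P_of q a b) powr (-1/2)"
        using r powr_neg_half_ge1[of "P_of q a b"] powr_neg_half_ge1[of "1 - P_of q a b"] by auto
      then have "1 \<le> P_of q a b powr (-1/2) * (1 - P_of q a b) powr (-1/2)"
        using mult_mono[OF h12] by simp
      then have "1 / Gamma (1/2) ^ 2 * 1 \<le> 1 / Gamma (1/2) ^ 2 * (P_of q a b powr (-1/2) * (1 - P_of q a b) powr (-1/2))"
        using g by (intro mult_left_mono) auto
      then show "0 \<le> 1 / Gamma (1/2::real) ^ 2 \<and> 1 / Gamma (1/2) ^ 2 \<le> (case ab of (a, b) \<Rightarrow>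
          1 / Gamma (1/2) ^ 2 * P_of q a b powr (-1/2) * (1 - P_of q a b) powr (-1/2))"
        using e by (simp add: mult_ac)
    qed
    finally show ?thesis by (simp add: upper_idx_def)
  qed
  have "GG k * (1 / Gamma (1/2) ^ 2) ^ card (upper_idx k) \<le>
     (GG k * (\<Prod>a\<in>{1..k}. pi_of k p a powr (-1/2))) *
     (\<Prod>(a, b)\<in>{(a, b). 1 \<le> a \<and> a \<le> b \<and> b \<le> k}.
        1 / Gamma (1/2) ^ 2 * P_of q a b powr (-1/2) * (1 - P_of q a b) powr (-1/2))"
  proof -
    have "GG k \<le> GG k * (\<Prod>a\<in>{1..k}. pi_of k p a powr (-1/2))"
      using h1 GG_nonneg[of k] mult_left_mono[OF h1, of "GG k"] by simp
    then show ?thesis using h2 GG_nonneg[of k] by (intro mult_mono) (auto intro: order_trans[OF GG_nonneg[of k]])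
  qed
  also have "\<dots> = kt_prior k (pi_of k p) (P_of q)"
    unfolding kt_prior_def GG_def by simp
  finally show ?thesis .
qed

definition cK :: "nat \<Rightarrow> real" where
  "cK k = GG k * (1 / Gamma (1/2) ^ 2) ^ card (upper_idx k) * exp (-2) ^ (k + k * k)"

lemma cK_pos: "k \<ge> 1 \<Longrightarrow> cK k > 0"
proof -
  assume k: "k \<ge> 1"
  have g: "Gamma (1/2::real) > 0" by (rule Gamma_real_pos) simp
  have "Gamma (real k / 2) > 0" using k by (intro Gamma_real_pos) auto
  then show ?thesis unfolding cK_def GG_def using g
    by (intro mult_pos_pos divide_pos_pos zero_less_power) auto
qed

lemma gI_ge:
  assumes k: "k \<ge> 1" and th: "(w1, P1) \<in> Theta k" and n: "n \<ge> 2"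
  shows "ennreal (cK k * sbm_marg k w1 P1 n (matu u)) * indicator (boxP k n w1) p * indicator (boxQ k n P1) q
     \<le> gI k n (matu u) p q"
proof (cases "p \<in> boxP k n w1 \<and> q \<in> boxQ k n P1")
  case True
  then have p: "p \<in> boxP k n w1" and q: "q \<in> boxQ k n P1" by auto
  have T: "(pi_of k p, P_of q) \<in> Theta k" by (rule box_Theta[OF k th n p q])
  have m: "exp (-2) ^ (k + k * k) * sbm_marg k w1 P1 n (matu u) \<le> sbm_marg k (pi_of k p) (P_of q) n (matu u)"
    by (rule marg_ratio[OF k th n p q])
  have pr: "GG k * (1 / Gamma (1/2) ^ 2) ^ card (upper_idx k) \<le> kt_prior k (pi_of k p) (P_of q)"
    by (rule prior_ge[OF k th n p q])
  have m0: "0 \<le> exp (-2) ^ (k + k * k) * sbm_marg k w1 P1 n (matu u)"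
    using marg_nonneg[OF th] by simp
  have c0: "0 \<le> GG k * (1 / Gamma (1/2) ^ 2) ^ card (upper_idx k)"
    using GG_nonneg by simp
  have "cK k * sbm_marg k w1 P1 n (matu u) =
     (exp (-2) ^ (k + k * k) * sbm_marg k w1 P1 n (matu u)) * (GG k * (1 / Gamma (1/2) ^ 2) ^ card (upper_idx k))"
    by (simp add: cK_def mult_ac)
  also have "\<dots> \<le> sbm_marg k (pi_of k p) (P_of q) n (matu u) * kt_prior k (pi_of k p) (P_of q)"
    using m pr m0 c0 by (intro mult_mono) (auto intro: order_trans)
  finally show ?thesis using True T unfolding gI_def by (auto intro!: ennreal_leI)
next
  case False then show ?thesis by auto
qed

lemma KT_lower:
  assumes k: "k \<ge> 1" and th: "(w1, P1) \<in> Theta k" and n: "n \<ge> 2" and u: "u \<in> UU n"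
  shows "cK k * (\<Prod>a\<in>{1..<k}. w1 a) * (1 / real n) ^ (k - 1 + 2 * card (upper_idx k)) * sbm_marg k w1 P1 n (matu u)
     \<le> KT k n (matu u)"
proof -
  interpret PQs: product_sigma_finite "\<lambda>_::nat\<times>nat. lborel::real measure" by standard
  interpret PPs: product_sigma_finite "\<lambda>_::nat. lborel::real measure" by standard
  have w1: "0 < w1 a" "w1 a \<le> 1" if "a \<in> {1..k}" for a using th that by (auto simp: Theta_def)
  have P1: "0 \<le> P1 a b" "P1 a b \<le> 1" if "a \<in> {1..k}" "b \<in> {1..k}" for a b
    using th that by (auto simp: Theta_def)
  have nn: "real n \<ge> 2" using n by simp
  define X where "X = cK k * sbm_marg k w1 P1 n (matu u)"
  have X0: "X \<ge> 0" unfolding X_def using cK_pos[OF k] marg_nonneg[OF th] by simp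
  have finU: "finite (upper_idx k)"
    by (rule finite_subset[of _ "{..k}\<times>{..k}"]) (auto simp: upper_idx_def)
  have Iq_sets: "Iq n c \<in> sets lborel" for c by (simp add: Iq_def)
  have Iq_meas: "emeasure lborel (Iq n c) = ennreal (1 / real n ^ 2)" for c
    by (simp add: Iq_def)
  have sQ: "boxQ k n P1 \<in> sets (PQ k)"
    unfolding boxQ_def using finU Iq_sets by (intro sets_PiM_I_finite) auto
  have sP: "boxP k n w1 \<in> sets (PP k)"
    unfolding boxP_def by (intro sets_PiM_I_finite) auto
  have mQ: "emeasure (PQ k) (boxQ k n P1) = ennreal ((1 / real n ^ 2) ^ card (upper_idx k))"
    unfolding boxQ_def using finU Iq_sets by (subst PQs.emeasure_PiM) (auto simp: Iq_meas ennreal_power)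
  have mP: "emeasure (PP k) (boxP k n w1) = ennreal ((\<Prod>a\<in>{1..<k}. w1 a) * (1 / real n) ^ (k - 1))"
  proof -
    have "emeasure (PP k) (boxP k n w1) = (\<Prod>a\<in>{1..<k}. emeasure lborel {w1 a * (1 - 1 / real n)<..w1 a})"
      unfolding boxP_def by (subst PPs.emeasure_PiM) auto
    also have "\<dots> = (\<Prod>a\<in>{1..<k}. ennreal (w1 a * (1 / real n)))"
    proof (rule prod.cong[OF refl])
      fix a assume a: "a \<in> {1..<k}"
      have "w1 a * (1 - 1 / real n) \<le> w1 a" using w1[of a] a nn by (auto simp: mult_le_cancel_left1)
      then show "emeasure lborel {w1 a * (1 - 1 / real n)<..w1 a} = ennreal (w1 a * (1 / real n))"
        by (simp add: algebra_simps)
    qed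
    also have "\<dots> = ennreal (\<Prod>a\<in>{1..<k}. w1 a * (1 / real n))"
      by (intro prod_ennreal mult_nonneg_nonneg) (use w1 in \<open>auto intro: less_imp_le\<close>)
    also have "(\<Prod>a\<in>{1..<k}. w1 a * (1 / real n)) = (\<Prod>a\<in>{1..<k}. w1 a) * (1 / real n) ^ (k - 1)"
      by (subst prod.distrib) simp
    finally show ?thesis .
  qed
  have "(\<integral>\<^sup>+ p. \<integral>\<^sup>+ q. ennreal X * indicator (boxP k n w1) p * indicator (boxQ k n P1) q \<partial>PQ k \<partial>PP k)
      \<le> II k n (matu u)"
    unfolding II_def X_def by (intro nn_integral_mono gI_ge[OF k th n])
  moreover have "(\<integral>\<^sup>+ p. \<integral>\<^sup>+ q. ennreal X * indicator (boxP k n w1) p * indicator (boxQ k n P1) q \<partial>PQ k \<partial>PP k)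
      = ennreal X * emeasure (PQ k) (boxQ k n P1) * emeasure (PP k) (boxP k n w1)"
  proof -
    have "(\<integral>\<^sup>+ p. \<integral>\<^sup>+ q. ennreal X * indicator (boxP k n w1) p * indicator (boxQ k n P1) q \<partial>PQ k \<partial>PP k)
       = (\<integral>\<^sup>+ p. (ennreal X * emeasure (PQ k) (boxQ k n P1)) * indicator (boxP k n w1) p \<partial>PP k)"
    proof (intro nn_integral_cong)
      fix p
      have "(\<integral>\<^sup>+ q. ennreal X * indicator (boxP k n w1) p * indicator (boxQ k n P1) q \<partial>PQ k)
         = (ennreal X * indicator (boxP k n w1) p) * emeasure (PQ k) (boxQ k n P1)"
        by (rule nn_integral_cmult_indicator[OF sQ])
      then show "(\<integral>\<^sup>+ q. ennreal X * indicator (boxP k n w1) p * indicator (boxQ k n P1) q \<partial>PQ k)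
         = (ennreal X * emeasure (PQ k) (boxQ k n P1)) * indicator (boxP k n w1) p"
        by (simp add: mult_ac)
    qed
    also have "\<dots> = ennreal X * emeasure (PQ k) (boxQ k n P1) * emeasure (PP k) (boxP k n w1)"
      by (rule nn_integral_cmult_indicator[OF sP])
    finally show ?thesis .
  qed
  ultimately have le: "ennreal (X * (1 / real n ^ 2) ^ card (upper_idx k) * ((\<Prod>a\<in>{1..<k}. w1 a) * (1 / real n) ^ (k - 1)))
      \<le> II k n (matu u)"
  proof -
    have pw: "0 \<le> (\<Prod>a\<in>{1..<k}. w1 a)" using w1 by (intro prod_nonneg) (auto intro: less_imp_le)
    have A0: "0 \<le> X * (1 / real n ^ 2) ^ card (upper_idx k)" using X0 by simp
    have B0: "0 \<le> (\<Prod>a\<in>{1..<k}. w1 a) * (1 / real n) ^ (k - 1)" using pw by simp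
    assume a1: "(\<integral>\<^sup>+ p. \<integral>\<^sup>+ q. ennreal X * indicator (boxP k n w1) p * indicator (boxQ k n P1) q \<partial>PQ k \<partial>PP k) \<le> II k n (matu u)"
      and a2: "(\<integral>\<^sup>+ p. \<integral>\<^sup>+ q. ennreal X * indicator (boxP k n w1) p * indicator (boxQ k n P1) q \<partial>PQ k \<partial>PP k)
      = ennreal X * emeasure (PQ k) (boxQ k n P1) * emeasure (PP k) (boxP k n w1)"
    have "ennreal (X * (1 / real n ^ 2) ^ card (upper_idx k) * ((\<Prod>a\<in>{1..<k}. w1 a) * (1 / real n) ^ (k - 1)))
       = ennreal X * emeasure (PQ k) (boxQ k n P1) * emeasure (PP k) (boxP k n w1)"
      unfolding mQ mP ennreal_mult[OF A0 B0] using X0 by (simp add: ennreal_mult)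
    then show ?thesis using a1 a2 by simp
  qed
  have eqY: "X * (1 / real n ^ 2) ^ card (upper_idx k) * ((\<Prod>a\<in>{1..<k}. w1 a) * (1 / real n) ^ (k - 1)) =
     cK k * (\<Prod>a\<in>{1..<k}. w1 a) * (1 / real n) ^ (k - 1 + 2 * card (upper_idx k)) * sbm_marg k w1 P1 n (matu u)"
  proof -
    have pw2: "(1 / real n ^ 2) ^ c = (1 / real n) ^ (2 * c)" for c :: nat
      by (simp add: power_mult power_one_over)
    show ?thesis unfolding X_def pw2 power_add by (simp add: mult_ac)
  qed
  have Y0: "0 \<le> X * (1 / real n ^ 2) ^ card (upper_idx k) * ((\<Prod>a\<in>{1..<k}. w1 a) * (1 / real n) ^ (k - 1))"
    using X0 w1 by (auto intro!: mult_nonneg_nonneg prod_nonneg intro: less_imp_le)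
  have "enn2real (ennreal (X * (1 / real n ^ 2) ^ card (upper_idx k) * ((\<Prod>a\<in>{1..<k}. w1 a) * (1 / real n) ^ (k - 1))))
     \<le> enn2real (II k n (matu u))"
    by (rule enn2real_mono[OF le II_fin[OF k u]])
  then show ?thesis using Y0 unfolding KT_II eqY[symmetric] by simp
qed



lemma KT_pos:
  assumes k: "k \<ge> 1" and n: "n \<ge> 2" and u: "u \<in> UU n"
  shows "KT k n (matu u) > 0"
proof -
  define w1 where "w1 = (\<lambda>a::nat. 1 / real k)"
  define P1 where "P1 = (\<lambda>(a::nat) (b::nat). 1/2 :: real)"
  have th: "(w1, P1) \<in> Theta k"
    using k by (auto simp: Theta_def w1_def P1_def)
  define z0 where "z0 = (\<lambda>i. if i < n then (1::nat) else undefined)"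
  have z0: "z0 \<in> labelings k n"
    using k by (auto simp: labelings_def z0_def PiE_def extensional_def)
  have j: "sbm_joint k w1 P1 n z0 (matu u) > 0"
    unfolding sbm_joint_def using k
    by (intro mult_pos_pos prod_pos) (auto simp: w1_def P1_def pow0_def)
  have m: "sbm_marg k w1 P1 n (matu u) > 0"
    unfolding sbm_marg_def
    by (rule sum_pos2[where i=z0]) (use z0 j joint_nonneg[OF th] in auto)
  have "0 < cK k * (\<Prod>a\<in>{1..<k}. w1 a) * (1 / real n) ^ (k - 1 + 2 * card (upper_idx k)) * sbm_marg k w1 P1 n (matu u)"
    using cK_pos[OF k] m n k by (intro mult_pos_pos prod_pos) (auto simp: w1_def)
  also have "\<dots> \<le> KT k n (matu u)" by (rule KT_lower[OF k th n u])
  finally show ?thesis .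
qed

lemma Gamma_half_pos: "Gamma (1/2::real) > 0" by (rule Gamma_real_pos) simp

lemma Gamma_half_ne0: "Gamma (1/2::real) \<noteq> 0" using Gamma_half_pos by linarith

lemma Gamma_half_ge1: "Gamma (1/2::real) \<ge> 1"
proof -
  have "1 \<le> sqrt pi" using pi_gt3 by simp
  then show ?thesis by (simp add: Gamma_one_half_real)
qed

lemma Gamma_half_nat_le: "k \<ge> 1 \<Longrightarrow> Gamma (real k / 2) \<le> 2 * real k ^ k"
proof (induction k rule: less_induct)
  case (less k)
  show ?case
  proof (cases "k \<le> 2")
    case True
    then have "k = 1 \<or> k = 2" using less.prems by auto
    then show ?thesis
    proof
      assume "k = 1"
      moreover have "sqrt pi \<le> 2"
      proof -
        have "sqrt pi \<le> sqrt 4" by (rule real_sqrt_le_mono) (use pi_less_4 in simp)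
        then show ?thesis by simp
      qed
      ultimately show ?thesis by (simp add: Gamma_one_half_real)
    next
      assume "k = 2" then show ?thesis by simp
    qed
  next
    case False
    define j where "j = k - 2"
    have j: "j \<ge> 1" "k = j + 2" using False by (auto simp: j_def)
    have IH: "Gamma (real j / 2) \<le> 2 * real j ^ j" using less.IH[of j] j by auto
    have "Gamma (real k / 2) = Gamma (real j / 2 + 1)" using j by (simp add: field_simps)
    also have "\<dots> = real j / 2 * Gamma (real j / 2)"
      using j by (intro Gamma_plus1) (auto simp: nonpos_Ints_def)
    also have "\<dots> \<le> real j / 2 * (2 * real j ^ j)" using IH by (intro mult_left_mono) auto
    also have "\<dots> = real j ^ (j + 1)" by simp
    also have "\<dots> \<le> real k ^ (j + 1)" using j by (intro power_mono) auto
    also have "\<dots> \<le> real k ^ k" using j by (intro power_increasing) auto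
    also have "\<dots> \<le> 2 * real k ^ k" by simp
    finally show ?thesis .
  qed
qed

lemma Beta_hh: "Beta (1/2) (1/2) = (pi::real)"
  by (simp add: Beta_def Gamma_one_half_real)

lemma Beta_h1: "Beta (1/2) 1 = (2::real)"
proof -
  have "Gamma (1/2 + 1 :: real) = 1/2 * Gamma (1/2)"
    by (rule Gamma_plus1) (use nonpos_Ints_nonpos[of "1/2::real"] in force)
  then have g: "Gamma (3/2 :: real) = 1/2 * Gamma (1/2)" by simp
  have "Beta (1/2) 1 = Gamma (1/2) / Gamma (3/2 :: real)" by (simp add: Beta_def)
  also have "\<dots> = 2" unfolding g using Gamma_half_ne0 by simp
  finally show ?thesis .
qed

lemma BB_eq: "k \<ge> 2 \<Longrightarrow> BB k = GG k * pi * 2 ^ (k - 2)"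
proof -
  assume "k \<ge> 2"
  have "Beta (1/2) (1/2) / Gamma (1/2) ^ 2 = (1::real)"
    using Gamma_half_ne0 by (simp add: Beta_hh Gamma_one_half_real)
  then show ?thesis using \<open>k \<ge> 2\<close> by (simp add: BB_def Beta_hh Beta_h1)
qed

lemma GG_le: "k \<ge> 1 \<Longrightarrow> GG k \<le> 2 * real k ^ k"
proof -
  assume k: "k \<ge> 1"
  have "Gamma (1/2::real) ^ k \<ge> 1" using Gamma_half_ge1 by (intro one_le_power)
  then have "Gamma (real k / 2) \<le> Gamma (real k / 2) * Gamma (1/2::real) ^ k"
    using mult_left_mono[of 1 "Gamma (1/2::real) ^ k" "Gamma (real k / 2)"] Gamma_half_nat_nonneg[of k] by simp
  then have "GG k \<le> Gamma (real k / 2)"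
    unfolding GG_def using Gamma_half_pos by (simp add: divide_le_eq)
  also have "\<dots> \<le> 2 * real k ^ k" by (rule Gamma_half_nat_le[OF k])
  finally show ?thesis .
qed

lemma BB_pos: "k \<ge> 1 \<Longrightarrow> BB k > 0"
proof -
  assume k: "k \<ge> 1"
  have "GG k > 0" unfolding GG_def using k Gamma_half_pos by (intro divide_pos_pos Gamma_real_pos) auto
  then show ?thesis
  proof (cases "k = 1")
    case True then show ?thesis by (simp add: BB_def Beta_hh Gamma_one_half_real)
  next
    case False then show ?thesis using k \<open>GG k > 0\<close> by (simp add: BB_eq)
  qed
qed

lemma BB_le_exp: "k \<ge> 1 \<Longrightarrow> BB k \<le> exp (3 + 2 * real k ^ 2)"
proof -
  assume k: "k \<ge> 1"
  have e3: "exp (3::real) \<ge> 2" using exp_ge_add_one_self[of 3] by simp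
  have pow: "(2 * real k) ^ k \<le> exp (2 * real k ^ 2)"
  proof -
    have "(2 * real k) ^ k = exp (real k * ln (2 * real k))"
      using k by (simp add: exp_of_nat_mult)
    also have "real k * ln (2 * real k) \<le> real k * (2 * real k - 1)"
      using k ln_le_minus_one[of "2 * real k"] by (intro mult_left_mono) auto
    then have "exp (real k * ln (2 * real k)) \<le> exp (2 * real k ^ 2)"
      by (simp add: power2_eq_square algebra_simps)
    finally show ?thesis .
  qed
  show ?thesis
  proof (cases "k = 1")
    case True
    then have "BB k = 1" by (simp add: BB_def Beta_hh Gamma_one_half_real)
    then show ?thesis using True by (simp add: order_trans[OF _ exp_ge_add_one_self])
  next
    case False
    then have k2: "k \<ge> 2" using k by auto
    have "BB k = GG k * (pi * 2 ^ (k - 2))" using BB_eq[OF k2] by simp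
    also have "\<dots> \<le> (2 * real k ^ k) * 2 ^ k"
    proof (rule mult_mono[OF GG_le[OF k]])
      have "pi * 2 ^ (k - 2) \<le> 4 * 2 ^ (k - 2)" using pi_less_4 by (intro mult_right_mono) auto
      also have "\<dots> = (2::real) ^ k"
      proof -
        obtain j where "k = j + 2" using k2 by (metis le_add_diff_inverse2)
        then show ?thesis by (simp add: power_add)
      qed
      finally show "pi * 2 ^ (k - 2) \<le> (2::real) ^ k" .
    qed (auto simp: pi_gt_zero[THEN less_imp_le])
    also have "\<dots> = 2 * (2 * real k) ^ k" by (simp add: power_mult_distrib)
    also have "\<dots> \<le> exp 3 * exp (2 * real k ^ 2)" using e3 pow by (intro mult_mono) auto
    also have "\<dots> = exp (3 + 2 * real k ^ 2)" by (simp add: exp_add)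
    finally show ?thesis .
  qed
qed

lemma pen_one: "pen e 1 n = 0"
  by (simp add: pen_def)

lemma pen_diff:
  assumes e: "e > 0" and kk: "k0 \<ge> 1" "k0 + 1 \<le> k"
  shows "pen e k n - pen e k0 n \<ge> real k ^ 2 / 2 * ln (real n)"
proof (cases "n = 0")
  case True then show ?thesis by (simp add: pen_def)
next
  case False
  then have L: "ln (real n) \<ge> 0" by simp
  define f where "f i = (real (i * (i + 2)) + 3 + e) / 2 * ln (real n)" for i
  have f0: "f i \<ge> 0" for i unfolding f_def using e L by (intro mult_nonneg_nonneg) auto
  have "pen e k n = (\<Sum>i=1..<k0. f i) + (\<Sum>i=k0..<k. f i)"
    unfolding pen_def f_def using kk by (subst sum.atLeastLessThan_concat) auto
  moreover have "pen e k0 n = (\<Sum>i=1..<k0. f i)" unfolding pen_def f_def by simp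
  moreover have "f (k - 1) \<le> (\<Sum>i=k0..<k. f i)" using kk f0 by (intro member_le_sum) auto
  moreover have "real k ^ 2 / 2 * ln (real n) \<le> f (k - 1)"
  proof -
    have "real ((k - 1) * (k - 1 + 2)) = real k ^ 2 - 1"
      using kk by (simp add: of_nat_diff power2_eq_square algebra_simps)
    then have "real k ^ 2 \<le> real ((k - 1) * (k - 1 + 2)) + 3 + e" using e by linarith
    then show ?thesis unfolding f_def using L by (intro mult_right_mono) auto
  qed
  ultimately show ?thesis by linarith
qed



lemma ln_le_BB: "k \<ge> 1 \<Longrightarrow> 0 < x \<Longrightarrow> x \<le> BB k \<Longrightarrow> ln x \<le> 3 + 2 * real k ^ 2"
proof -
  assume k: "k \<ge> 1" and x: "0 < x" "x \<le> BB k"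
  have "x \<le> exp (3 + 2 * real k ^ 2)" using x BB_le_exp[OF k] by linarith
  then have "ln x \<le> ln (exp (3 + 2 * real k ^ 2))" using x by (intro ln_mono) auto
  then show ?thesis by simp
qed

lemma det:
  fixes e :: real
  assumes e: "e > 0" and k0: "k0 \<ge> 1" and th: "(w0, P0) \<in> Theta k0"
    and L8: "ln (real n) \<ge> 8" and Lk0: "ln (real n) \<ge> real k0 + 1"
    and LD: "ln (real n) ^ 2 \<ge> 8 * (3 + real (k0 - 1 + 2 * card (upper_idx k0))) + 1"
    and Lc: "ln (real n) ^ 2 \<ge> 3 - ln (cK k0 * (\<Prod>a\<in>{1..<k0}. w0 a)) + 1"
    and u: "u \<in> UU n"
    and m0pos: "sbm_marg k0 w0 P0 n (matu u) > 0"
    and good: "\<forall>k\<in>{1..n}. KT k n (matu u) \<le> real n ^ 3 * BB k * sbm_marg k0 w0 P0 n (matu u)"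
  shows "\<not> (ln (real n) < real (k_KT e n (matu u)) \<and> k_KT e n (matu u) \<le> n)"
proof
  define L where "L = ln (real n)"
  define s where "s k = kt_score e n (matu u) k" for k
  define m0 where "m0 = sbm_marg k0 w0 P0 n (matu u)"
  define D0 where "D0 = k0 - 1 + 2 * card (upper_idx k0)"
  define c0 where "c0 = cK k0 * (\<Prod>a\<in>{1..<k0}. w0 a)"
  have n2: "n \<ge> 2"
  proof (rule ccontr)
    assume "\<not> n \<ge> 2"
    then have "n = 0 \<or> n = 1" by auto
    then show False using L8 by auto
  qed
  have Lpos: "L \<ge> 8" using L8 by (simp add: L_def)
  have KTpos: "KT k n (matu u) > 0" if "k \<ge> 1" for k using KT_pos[OF that n2 u] .
  have s_up: "s k \<le> 3 + 2 * real k ^ 2 - pen e k n" if k: "k \<ge> 1" for k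
  proof -
    have "ln (KT k n (matu u)) \<le> 3 + 2 * real k ^ 2"
      using ln_le_BB[OF k KTpos[OF k] KT_le_BB[OF k u]] .
    then show ?thesis by (simp add: s_def kt_score_def)
  qed
  have pen_big: "pen e k n \<ge> real k ^ 2 / 2 * L" if k: "k \<ge> 2" for k
  proof -
    have h: "pen e k n - pen e 1 n \<ge> real k ^ 2 / 2 * ln (real n)" by (rule pen_diff[OF e]) (use k in auto)
    then show ?thesis using pen_one[of e n] unfolding L_def by linarith
  qed
  have s_up2: "s k \<le> 3 - 2 * real k ^ 2" if k: "k \<ge> 2" for k
  proof -
    have h1: "real k ^ 2 * L \<ge> real k ^ 2 * 8" using Lpos by (intro mult_left_mono) auto
    have h2: "s k \<le> 3 + 2 * real k ^ 2 - pen e k n" using s_up k by auto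
    show ?thesis using h1 h2 pen_big[OF k] by linarith
  qed
  define K where "K = nat \<lceil>\<bar>3 - s 1\<bar>\<rceil> + 2"
  have far: "s k < s 1" if k: "k > K" for k
  proof -
    have k2: "k \<ge> 2" using k by (simp add: K_def)
    have "real k > \<bar>3 - s 1\<bar>" using k unfolding K_def by linarith
    moreover have "real k ^ 2 \<ge> real k" using k2 by (simp add: power2_eq_square)
    ultimately show ?thesis using s_up2[OF k2] by linarith
  qed
  define S where "S = {1..K}"
  have SK: "finite S" "S \<noteq> {}" "1 \<in> S" by (auto simp: S_def K_def)
  define mx where "mx = Max (s ` S)"
  have "mx \<in> s ` S" unfolding mx_def using SK by (intro Max_in) auto
  then obtain km where km: "km \<in> S" "s km = mx" by auto
  have mx_ge: "s k \<le> mx" if "k \<in> S" for k unfolding mx_def using SK that by (intro Max_ge) auto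
  have glob: "s k \<le> s km" if "k \<ge> 1" for k
  proof (cases "k \<le> K")
    case True then show ?thesis using that mx_ge km by (auto simp: S_def)
  next
    case False then have "s k < s 1" using far by auto
    then show ?thesis using mx_ge[OF SK(3)] km by auto
  qed
  have exP: "\<exists>k. 1 \<le> k \<and> (\<forall>k'\<ge>1. kt_score e n (matu u) k' \<le> kt_score e n (matu u) k)"
    using km glob by (intro exI[of _ km]) (auto simp: S_def s_def)
  have kKT: "1 \<le> k_KT e n (matu u) \<and> (\<forall>k'\<ge>1. s k' \<le> s (k_KT e n (matu u)))"
    unfolding k_KT_def s_def by (rule LeastI_ex[OF exP])
  assume contra: "ln (real n) < real (k_KT e n (matu u)) \<and> k_KT e n (matu u) \<le> n"
  define kk where "kk = k_KT e n (matu u)"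
  have kkL: "L < real kk" and kkn: "kk \<le> n" using contra by (auto simp: kk_def L_def)
  have kk1: "kk \<ge> 1" using kKT by (simp add: kk_def)
  have kkk0: "k0 + 1 \<le> kk" using kkL Lk0 unfolding L_def by linarith
  have m0p: "m0 > 0" using m0pos by (simp add: m0_def)
  have BBp: "BB kk > 0" using BB_pos[OF kk1] .
  have c0p: "c0 > 0" unfolding c0_def using cK_pos[OF k0] th
    by (intro mult_pos_pos prod_pos) (auto simp: Theta_def)
  have npos: "real n > 0" using n2 by simp
  have up1: "ln (KT kk n (matu u)) \<le> 3 * L + (3 + 2 * real kk ^ 2) + ln m0"
  proof -
    have "KT kk n (matu u) \<le> real n ^ 3 * BB kk * m0" using good kk1 kkn by (auto simp: m0_def)
    then have "ln (KT kk n (matu u)) \<le> ln (real n ^ 3 * BB kk * m0)"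
      using KTpos[OF kk1] by (intro ln_mono) auto
    also have "\<dots> = 3 * L + ln (BB kk) + ln m0"
      using npos BBp m0p by (simp add: ln_mult ln_realpow L_def)
    also have "ln (BB kk) \<le> 3 + 2 * real kk ^ 2" using ln_le_BB[OF kk1 BBp] by simp
    finally show ?thesis by simp
  qed
  have lo0: "ln (KT k0 n (matu u)) \<ge> ln c0 - real D0 * L + ln m0"
  proof -
    have "c0 * (1 / real n) ^ D0 * m0 \<le> KT k0 n (matu u)"
      using KT_lower[OF k0 th n2 u] by (simp add: c0_def D0_def m0_def)
    moreover have pos: "0 < c0 * (1 / real n) ^ D0 * m0" using c0p m0p npos by simp
    ultimately have "ln (c0 * (1 / real n) ^ D0 * m0) \<le> ln (KT k0 n (matu u))"
      by (intro ln_mono) auto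
    moreover have "ln (c0 * (1 / real n) ^ D0 * m0) = ln c0 - real D0 * L + ln m0"
      using c0p m0p npos by (simp add: ln_mult ln_realpow ln_div L_def)
    ultimately show ?thesis by simp
  qed
  have pd: "pen e kk n - pen e k0 n \<ge> real kk ^ 2 / 2 * L"
    using pen_diff[OF e k0 kkk0] by (simp add: L_def)
  define K2 where "K2 = real kk ^ 2"
  have K2L: "K2 \<ge> L ^ 2"
    unfolding K2_def using kkL Lpos by (intro power_mono) auto
  have K2n: "K2 \<ge> 0" by (simp add: K2_def)
  have a1: "K2 * L / 4 \<ge> 2 * K2"
  proof -
    have "K2 * L \<ge> K2 * 8" using Lpos K2n by (intro mult_left_mono) auto
    then show ?thesis by simp
  qed
  have a2: "K2 * L / 8 > (3 + real D0) * L"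
  proof -
    have "K2 / 8 > 3 + real D0" using K2L LD unfolding L_def D0_def by simp
    then have "(K2 / 8) * L > (3 + real D0) * L" using Lpos by (intro mult_strict_right_mono) auto
    then show ?thesis by simp
  qed
  have a3: "K2 * L / 8 > 3 - ln c0"
  proof -
    have "K2 * L \<ge> K2 * 8" using Lpos K2n by (intro mult_left_mono) auto
    moreover have "K2 > 3 - ln c0" using K2L Lc unfolding L_def c0_def by simp
    ultimately show ?thesis by simp
  qed
  have "s kk < s k0"
  proof -
    have "s kk - s k0 = ln (KT kk n (matu u)) - ln (KT k0 n (matu u)) - (pen e kk n - pen e k0 n)"
      by (simp add: s_def kt_score_def)
    also have "\<dots> \<le> 3 * L + (3 + 2 * K2) - (ln c0 - real D0 * L) - K2 * L / 2"
      using up1 lo0 pd unfolding K2_def by simp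
    also have "\<dots> < 0" using a1 a2 a3 by (simp add: algebra_simps)
    finally show ?thesis by simp
  qed
  moreover have "s k0 \<le> s kk" using kKT k0 by (simp add: kk_def)
  ultimately show False by simp
qed



definition Ev :: "'w measure \<Rightarrow> ('w \<Rightarrow> nat \<Rightarrow> nat) \<Rightarrow> ('w \<Rightarrow> nat \<Rightarrow> nat \<Rightarrow> bool) \<Rightarrow> nat \<Rightarrow> (nat \<Rightarrow> nat) \<Rightarrow> (nat \<times> nat \<Rightarrow> bool) \<Rightarrow> 'w set" where
  "Ev M Z X n z u = {\<omega> \<in> space M. (\<forall>i<n. Z \<omega> i = z i) \<and> (\<forall>i<n. \<forall>j<n. X \<omega> i j = matu u i j)}"

definition Ag :: "'w measure \<Rightarrow> ('w \<Rightarrow> nat \<Rightarrow> nat \<Rightarrow> bool) \<Rightarrow> nat \<Rightarrow> (nat \<times> nat \<Rightarrow> bool) \<Rightarrow> 'w set" where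
  "Ag M X n u = {\<omega> \<in> space M. \<forall>i<n. \<forall>j<n. X \<omega> i j = matu u i j}"

definition Full :: "'w measure \<Rightarrow> ('w \<Rightarrow> nat \<Rightarrow> nat) \<Rightarrow> ('w \<Rightarrow> nat \<Rightarrow> nat \<Rightarrow> bool) \<Rightarrow> nat \<Rightarrow> nat \<Rightarrow> 'w set" where
  "Full M Z X k0 n = (\<Union>p\<in>labelings k0 n \<times> UU n. Ev M Z X n (fst p) (snd p))"

context
  fixes M :: "'w measure" and Z :: "'w \<Rightarrow> nat \<Rightarrow> nat" and X :: "'w \<Rightarrow> nat \<Rightarrow> nat \<Rightarrow> bool"
    and k0 :: nat and w0 :: "nat \<Rightarrow> real" and P0 :: "nat \<Rightarrow> nat \<Rightarrow> real"
  assumes PS: "prob_space M"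
    and TH: "(w0, P0) \<in> Theta k0"
    and MZ: "\<And>i. (\<lambda>\<omega>. Z \<omega> i) \<in> measurable M (count_space UNIV)"
    and MX: "\<And>i j. (\<lambda>\<omega>. X \<omega> i j) \<in> measurable M (count_space UNIV)"
    and JT: "\<And>n z x. z \<in> labelings k0 n \<Longrightarrow> adj_matrix n x \<Longrightarrow>
           measure M {\<omega> \<in> space M. (\<forall>i<n. Z \<omega> i = z i) \<and> (\<forall>i<n. \<forall>j<n. X \<omega> i j = x i j)}
             = sbm_joint k0 w0 P0 n z x"
begin

lemma Ev_sets: "Ev M Z X n z u \<in> sets M"
proof -
  note MZ[measurable] MX[measurable]
  show ?thesis unfolding Ev_def by measurable
qed

lemma Ag_sets: "Ag M X n u \<in> sets M"
proof -
  note MX[measurable]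
  show ?thesis unfolding Ag_def by measurable
qed

lemma Ev_meas: "z \<in> labelings k0 n \<Longrightarrow> measure M (Ev M Z X n z u) = sbm_joint k0 w0 P0 n z (matu u)"
  unfolding Ev_def by (rule JT) (auto simp: adj_matu)

lemma labelings_ext: "z \<in> labelings k n \<Longrightarrow> z' \<in> labelings k n \<Longrightarrow> (\<forall>i<n. z i = z' i) \<Longrightarrow> z = z'"
  unfolding labelings_def by (rule PiE_ext) auto

lemma Ev_disj: "disjoint_family_on (\<lambda>p. Ev M Z X n (fst p) (snd p)) (labelings k0 n \<times> UU n)"
  unfolding disjoint_family_on_def
proof (intro ballI impI)
  fix p q assume p: "p \<in> labelings k0 n \<times> UU n" and q: "q \<in> labelings k0 n \<times> UU n" and pq: "p \<noteq> q"
  show "Ev M Z X n (fst p) (snd p) \<inter> Ev M Z X n (fst q) (snd q) = {}"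
  proof (rule ccontr)
    assume "Ev M Z X n (fst p) (snd p) \<inter> Ev M Z X n (fst q) (snd q) \<noteq> {}"
    then obtain \<omega> where w: "\<omega> \<in> Ev M Z X n (fst p) (snd p)" "\<omega> \<in> Ev M Z X n (fst q) (snd q)" by blast
    have "fst p = fst q"
      using w p q by (intro labelings_ext[of _ k0 n]) (auto simp: Ev_def)
    moreover have "snd p = snd q"
      using w p q by (intro matu_inj[of _ n]) (auto simp: Ev_def)
    ultimately show False using pq by (simp add: prod_eq_iff)
  qed
qed

lemma Full_sets: "Full M Z X k0 n \<in> sets M"
  unfolding Full_def using Ev_sets by (intro sets.finite_UN) auto

lemma measure_Full: "measure M (Full M Z X k0 n) = 1"
proof -
  interpret prob_space M by (rule PS)
  have "measure M (Full M Z X k0 n) = (\<Sum>p\<in>labelings k0 n \<times> UU n. measure M (Ev M Z X n (fst p) (snd p)))"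
    unfolding Full_def using Ev_sets Ev_disj by (intro finite_measure_finite_Union) auto
  also have "\<dots> = (\<Sum>p\<in>labelings k0 n \<times> UU n. sbm_joint k0 w0 P0 n (fst p) (matu (snd p)))"
    by (intro sum.cong) (auto simp: Ev_meas)
  also have "\<dots> = (\<Sum>z\<in>labelings k0 n. \<Sum>u\<in>UU n. sbm_joint k0 w0 P0 n z (matu u))"
    by (simp add: sum.cartesian_product case_prod_beta)
  also have "\<dots> = (\<Sum>u\<in>UU n. sbm_marg k0 w0 P0 n (matu u))"
    unfolding sbm_marg_def by (rule sum.swap)
  also have "\<dots> = 1" by (rule total_marg[OF TH])
  finally show ?thesis .
qed

lemma AE_Full: "AE \<omega> in M. \<omega> \<in> Full M Z X k0 n"
proof -
  interpret prob_space M by (rule PS)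
  show ?thesis using measure_Full by (intro AE_prob_1)
qed

lemma Full_adj: "\<omega> \<in> Full M Z X k0 n \<Longrightarrow> adj_matrix n (X \<omega>)"
  unfolding Full_def Ev_def adj_matrix_def by (auto simp: matu_def)

lemma AE_adj: "AE \<omega> in M. \<forall>n. adj_matrix n (X \<omega>)"
proof -
  have "AE \<omega> in M. adj_matrix n (X \<omega>)" for n
    using AE_Full[of n] by eventually_elim (rule Full_adj)
  then show ?thesis unfolding AE_all_countable by auto
qed

lemma Ag_le:
  assumes S: "S \<subseteq> UU n"
  shows "measure M (\<Union>u\<in>S. Ag M X n u) \<le> (\<Sum>u\<in>S. sbm_marg k0 w0 P0 n (matu u))"
proof -
  interpret prob_space M by (rule PS)
  have fS: "finite S" using S finite_subset finite_UU by blast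
  define G where "G = (\<Union>p\<in>labelings k0 n \<times> S. Ev M Z X n (fst p) (snd p))"
  have Gs: "G \<in> sets M" unfolding G_def using Ev_sets fS by (intro sets.finite_UN) auto
  have sub: "(\<Union>u\<in>S. Ag M X n u) \<subseteq> G \<union> (space M - Full M Z X k0 n)"
  proof
    fix \<omega> assume "\<omega> \<in> (\<Union>u\<in>S. Ag M X n u)"
    then obtain u where u: "u \<in> S" "\<omega> \<in> Ag M X n u" by auto
    show "\<omega> \<in> G \<union> (space M - Full M Z X k0 n)"
    proof (cases "\<omega> \<in> Full M Z X k0 n")
      case True
      then obtain z u' where zu: "z \<in> labelings k0 n" "u' \<in> UU n" "\<omega> \<in> Ev M Z X n z u'"
        unfolding Full_def by auto
      have "u' = u"
        using zu u S by (intro matu_inj[of _ n]) (auto simp: Ev_def Ag_def)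
      then show ?thesis using zu u unfolding G_def by auto
    next
      case False then show ?thesis using u by (auto simp: Ag_def)
    qed
  qed
  have "measure M (\<Union>u\<in>S. Ag M X n u) \<le> measure M (G \<union> (space M - Full M Z X k0 n))"
    using sub Gs Full_sets by (intro finite_measure_mono) auto
  also have "\<dots> \<le> measure M G + measure M (space M - Full M Z X k0 n)"
    using Gs Full_sets by (intro measure_Un_le) auto
  also have "measure M (space M - Full M Z X k0 n) = 0"
    using prob_compl[OF Full_sets] measure_Full by simp
  also have "measure M G = (\<Sum>p\<in>labelings k0 n \<times> S. measure M (Ev M Z X n (fst p) (snd p)))"
  proof -
    have dj: "disjoint_family_on (\<lambda>p. Ev M Z X n (fst p) (snd p)) (labelings k0 n \<times> S)"
      by (rule disjoint_family_on_mono[OF _ Ev_disj[of n]]) (use S in auto)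
    show ?thesis unfolding G_def using Ev_sets fS dj by (intro finite_measure_finite_Union) auto
  qed
  also have "\<dots> = (\<Sum>p\<in>labelings k0 n \<times> S. sbm_joint k0 w0 P0 n (fst p) (matu (snd p)))"
    by (intro sum.cong) (auto simp: Ev_meas)
  also have "\<dots> = (\<Sum>z\<in>labelings k0 n. \<Sum>u\<in>S. sbm_joint k0 w0 P0 n z (matu u))"
    by (simp add: sum.cartesian_product case_prod_beta)
  also have "\<dots> = (\<Sum>u\<in>S. sbm_marg k0 w0 P0 n (matu u))"
    unfolding sbm_marg_def by (rule sum.swap)
  finally show ?thesis by simp
qed

end



definition Bad :: "nat \<Rightarrow> (nat \<Rightarrow> real) \<Rightarrow> (nat \<Rightarrow> nat \<Rightarrow> real) \<Rightarrow> nat \<Rightarrow> (nat \<times> nat \<Rightarrow> bool) set" where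
  "Bad k0 w0 P0 n = {u \<in> UU n. sbm_marg k0 w0 P0 n (matu u) = 0 \<or>
      (\<exists>k\<in>{1..n}. KT k n (matu u) > real n ^ 3 * BB k * sbm_marg k0 w0 P0 n (matu u))}"

lemma Bad_sub: "Bad k0 w0 P0 n \<subseteq> UU n" by (auto simp: Bad_def)

lemma bad_sum:
  assumes th: "(w0, P0) \<in> Theta k0" and n: "n \<ge> 1"
  shows "(\<Sum>u\<in>Bad k0 w0 P0 n. sbm_marg k0 w0 P0 n (matu u)) \<le> 1 / real n ^ 2"
proof -
  define m0 where "m0 u = sbm_marg k0 w0 P0 n (matu u)" for u
  have m0n: "m0 u \<ge> 0" for u unfolding m0_def by (rule marg_nonneg[OF th])
  define T where "T k u = (if KT k n (matu u) > real n ^ 3 * BB k * m0 u then m0 u else 0)" for k u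
  have Tn: "T k u \<ge> 0" for k u using m0n by (simp add: T_def)
  have npos: "real n > 0" using n by simp
  have "(\<Sum>u\<in>Bad k0 w0 P0 n. m0 u) \<le> (\<Sum>u\<in>Bad k0 w0 P0 n. \<Sum>k\<in>{1..n}. T k u)"
  proof (rule sum_mono)
    fix u assume u: "u \<in> Bad k0 w0 P0 n"
    show "m0 u \<le> (\<Sum>k\<in>{1..n}. T k u)"
    proof (cases "m0 u = 0")
      case True then show ?thesis using Tn by (simp add: sum_nonneg)
    next
      case False
      then obtain k where k: "k \<in> {1..n}" "KT k n (matu u) > real n ^ 3 * BB k * m0 u"
        using u by (auto simp: Bad_def m0_def)
      have "m0 u = T k u" using k by (simp add: T_def)
      also have "\<dots> \<le> (\<Sum>k\<in>{1..n}. T k u)" using k Tn by (intro member_le_sum) auto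
      finally show ?thesis .
    qed
  qed
  also have "\<dots> \<le> (\<Sum>u\<in>UU n. \<Sum>k\<in>{1..n}. T k u)"
    using Tn Bad_sub by (intro sum_mono2) (auto intro: sum_nonneg)
  also have "\<dots> = (\<Sum>k\<in>{1..n}. \<Sum>u\<in>UU n. T k u)" by (rule sum.swap)
  also have "\<dots> \<le> (\<Sum>k\<in>{1..n}. 1 / real n ^ 3)"
  proof (rule sum_mono)
    fix k assume k: "k \<in> {1..n}"
    have k1: "k \<ge> 1" using k by auto
    have cpos: "real n ^ 3 * BB k > 0" using npos BB_pos[OF k1] by simp
    have "(\<Sum>u\<in>UU n. T k u) \<le> (\<Sum>u\<in>UU n. KT k n (matu u) / (real n ^ 3 * BB k))"
    proof (rule sum_mono)
      fix u
      show "T k u \<le> KT k n (matu u) / (real n ^ 3 * BB k)"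
      proof (cases "KT k n (matu u) > real n ^ 3 * BB k * m0 u")
        case True
        then have "m0 u * (real n ^ 3 * BB k) < KT k n (matu u)" by (simp add: mult_ac)
        then have "m0 u < KT k n (matu u) / (real n ^ 3 * BB k)" using cpos by (simp add: pos_less_divide_eq)
        then show ?thesis using True by (simp add: T_def)
      next
        case False then show ?thesis using cpos KT_nonneg by (simp add: T_def)
      qed
    qed
    also have "\<dots> = (\<Sum>u\<in>UU n. KT k n (matu u)) / (real n ^ 3 * BB k)"
      by (simp add: sum_divide_distrib)
    also have "\<dots> \<le> BB k / (real n ^ 3 * BB k)"
      using sum_KT_le[OF k1, of n] cpos by (intro divide_right_mono) auto
    also have "\<dots> = 1 / real n ^ 3" using BB_pos[OF k1] by simp
    finally show "(\<Sum>u\<in>UU n. T k u) \<le> 1 / real n ^ 3" .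
  qed
  also have "\<dots> = real n / real n ^ 3" by simp
  also have "\<dots> = 1 / real n ^ 2" using npos by (simp add: power3_eq_cube power2_eq_square)
  finally show ?thesis by (simp add: m0_def)
qed

theorem lemma2:
  fixes M :: "'w measure" and Z :: "'w \<Rightarrow> nat \<Rightarrow> nat" and X :: "'w \<Rightarrow> nat \<Rightarrow> nat \<Rightarrow> bool"
    and k0 :: nat and \<pi>0 :: "nat \<Rightarrow> real" and P0 :: "nat \<Rightarrow> nat \<Rightarrow> real" and \<epsilon> :: real
  assumes "prob_space M"
    and "\<epsilon> > 0"
    and "k0 \<ge> 1"
    and "(\<pi>0, P0) \<in> Theta k0"
    and "sbm_order k0 \<pi>0 P0 = k0"
    and "\<And>i. (\<lambda>\<omega>. Z \<omega> i) \<in> measurable M (count_space UNIV)"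
    and "\<And>i j. (\<lambda>\<omega>. X \<omega> i j) \<in> measurable M (count_space UNIV)"
    and "\<And>n z x. z \<in> labelings k0 n \<Longrightarrow> adj_matrix n x \<Longrightarrow>
           measure M {\<omega> \<in> space M. (\<forall>i<n. Z \<omega> i = z i) \<and> (\<forall>i<n. \<forall>j<n. X \<omega> i j = x i j)}
             = sbm_joint k0 \<pi>0 P0 n z x"
  shows "AE \<omega> in M. eventually
           (\<lambda>n. \<not> (ln (real n) < real (k_KT \<epsilon> n (X \<omega>)) \<and> k_KT \<epsilon> n (X \<omega>) \<le> n)) sequentially"
proof -
  note PS = assms(1) and EP = assms(2) and K0 = assms(3) and TH = assms(4)
    and MZ = assms(6) and MX = assms(7) and JT = assms(8)
  interpret prob_space M by (rule PS)
  define B where "B n = (\<Union>u\<in>Bad k0 \<pi>0 P0 n. Ag M X n u)" for n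
  have finBad: "finite (Bad k0 \<pi>0 P0 n)" for n by (rule finite_subset[OF Bad_sub finite_UU])
  have Bs: "B n \<in> sets M" for n
    unfolding B_def using finBad Ag_sets[OF PS TH MZ MX JT] by (intro sets.finite_UN) auto
  have Bm: "measure M (B n) \<le> 1 / real n ^ 2" if n: "n \<ge> 1" for n
  proof -
    have "measure M (B n) \<le> (\<Sum>u\<in>Bad k0 \<pi>0 P0 n. sbm_marg k0 \<pi>0 P0 n (matu u))"
      unfolding B_def by (rule Ag_le[OF PS TH MZ MX JT Bad_sub])
    also have "\<dots> \<le> 1 / real n ^ 2" by (rule bad_sum[OF TH n])
    finally show ?thesis .
  qed
  have summ: "summable (\<lambda>n. measure M (B n))"
  proof (rule summable_comparison_test'[where N=1])
    show "summable (\<lambda>n. inverse (real n ^ 2))" by (rule inverse_power_summable) simp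
    fix n :: nat assume "n \<ge> 1"
    then show "norm (measure M (B n)) \<le> inverse (real n ^ 2)"
      using Bm[of n] by (simp add: inverse_eq_divide)
  qed
  have BC: "AE \<omega> in M. eventually (\<lambda>n. \<omega> \<in> space M - B n) sequentially"
    by (rule borel_cantelli_AE1) (auto simp: Bs summ less_top[symmetric])
  have ADJ: "AE \<omega> in M. \<forall>n. adj_matrix n (X \<omega>)" by (rule AE_adj[OF PS TH MZ MX JT])
  define D0 where "D0 = k0 - 1 + 2 * card (upper_idx k0)"
  define c0 where "c0 = cK k0 * (\<Prod>a\<in>{1..<k0}. \<pi>0 a)"
  define A where "A = max 8 (max (real k0 + 1) (max (8 * (3 + real D0) + 1) (\<bar>3 - ln c0 + 1\<bar>)))"
  have A1: "A \<ge> 1" by (simp add: A_def)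
  have evL: "eventually (\<lambda>n. ln (real n) \<ge> A) sequentially"
  proof -
    have "filterlim (\<lambda>n. ln (real n)) at_top sequentially"
      by (rule filterlim_compose[OF ln_at_top filterlim_real_sequentially])
    then show ?thesis by (simp add: filterlim_at_top)
  qed
  show ?thesis
    using BC ADJ
  proof eventually_elim
    fix \<omega> assume w: "eventually (\<lambda>n. \<omega> \<in> space M - B n) sequentially" "\<forall>n. adj_matrix n (X \<omega>)"
    show "eventually (\<lambda>n. \<not> (ln (real n) < real (k_KT \<epsilon> n (X \<omega>)) \<and> k_KT \<epsilon> n (X \<omega>) \<le> n)) sequentially"
      using w(1) evL
    proof eventually_elim
      fix n assume n: "\<omega> \<in> space M - B n" "ln (real n) \<ge> A"
      define u where "u = resU n (X \<omega>)"
      have uU: "u \<in> UU n" unfolding u_def by (rule resU_UU)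
      have ag: "agree n (X \<omega>) (matu u)" unfolding u_def by (rule agree_resU[OF w(2)[rule_format]])
      have "\<omega> \<in> Ag M X n u" using n(1) ag by (auto simp: Ag_def agree_def)
      then have nb: "u \<notin> Bad k0 \<pi>0 P0 n" using n(1) by (auto simp: B_def)
      have m0pos: "sbm_marg k0 \<pi>0 P0 n (matu u) > 0"
        using nb uU marg_nonneg[OF TH, of n "matu u"] by (auto simp: Bad_def)
      have good: "\<forall>k\<in>{1..n}. KT k n (matu u) \<le> real n ^ 3 * BB k * sbm_marg k0 \<pi>0 P0 n (matu u)"
        using nb uU by (auto simp: Bad_def not_less)
      have LA: "ln (real n) \<ge> A" using n(2) .
      have LA2: "ln (real n) ^ 2 \<ge> A"
      proof -
        have "ln (real n) * ln (real n) \<ge> ln (real n) * 1" using LA A1 by (intro mult_left_mono) auto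
        then show ?thesis using LA by (simp add: power2_eq_square)
      qed
      have "\<not> (ln (real n) < real (k_KT \<epsilon> n (matu u)) \<and> k_KT \<epsilon> n (matu u) \<le> n)"
      proof (rule det[OF EP K0 TH _ _ _ _ uU m0pos good])
        show "ln (real n) \<ge> 8" using LA by (simp add: A_def)
        show "ln (real n) \<ge> real k0 + 1" using LA by (simp add: A_def)
        show "ln (real n) ^ 2 \<ge> 8 * (3 + real (k0 - 1 + 2 * card (upper_idx k0))) + 1"
          using LA2 by (simp add: A_def D0_def)
        show "ln (real n) ^ 2 \<ge> 3 - ln (cK k0 * (\<Prod>a\<in>{1..<k0}. \<pi>0 a)) + 1"
        proof -
          have "3 - ln c0 + 1 \<le> \<bar>3 - ln c0 + 1\<bar>" by (rule abs_ge_self)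
          also have "\<dots> \<le> A" by (simp add: A_def)
          finally show ?thesis using LA2 by (simp add: c0_def)
        qed
      qed
      then show "\<not> (ln (real n) < real (k_KT \<epsilon> n (X \<omega>)) \<and> k_KT \<epsilon> n (X \<omega>) \<le> n)"
        using kKT_agree[OF ag, of \<epsilon>] by simp
    qed
  qed
qed


end
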